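(* Let $h\in\mathbb{R}[x_1,\ldots,x_n]$ be hyperbolic with respect to $\mathbf{e}$, with hyperbolicity cone $\Lambda_{++}=\Lambda_{++}(\mathbf{e})$ and closed cone $\Lambda_+$. If $\mathbf{v}_1,\ldots,\mathbf{v}_m\in\Lambda_+$, then $h[\mathbf{v}_1,\ldots,\mathbf{v}_m]$ is hyperbolic (with respect to $(\mathbf{e},0,\ldots,0)$) with hyperbolicity cone containing $\Lambda_{++}\times(-\mathbb{R}_+^m)$, where $\mathbb{R}_+=[0,\infty)$.
   Context: A homogeneous polynomial $h$ of degree $d$ is hyperbolic with respect to $\mathbf{e}\in\mathbb{R}^n$ if $h(\mathbf{e})\neq0$ and for every $\mathbf{x}\in\mathbb{R}^n$, $t\mapsto h(t\mathbf{e}-\mathbf{x})$ has only real zeros; writing $h(t\mathbf{e}-\mathbf{x})=h(\mathbf{e})\prod_{j=1}^d(t-\lambda_j(\mathbf{x}))$ defines the eigenvalues. The (open) hyperbolicity cone is $\Lambda_{++}(\mathbf{e})=\{\mathbf{x}:\min_j\lambda_j(\mathbf{x})>0\}$ and $\Lambda_+(\mathbf{e})=\{\mathbf{x}:\min_j\lambda_j(\mathbf{x})\geq0\}$. For $\mathbf{v}\in\mathbb{R}^n$, $D_{\mathbf{v}}=\sum_k v_k\partial/\partial x_k$. For $\mathbf{v}_1,\ldots,\mathbf{v}_m\in\mathbb{R}^n$, $h[\mathbf{v}_1,\ldots,\mathbf{v}_m]\in\mathbb{R}[x_1,\ldots,x_n,y_1,\ldots,y_m]$ is defined by $h[\mathbf{v}_1,\ldots,\mathbf{v}_m]=\prod_{j=1}^m(1-y_jD_{\mathbf{v}_j})\,h(\mathbf{x})$.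 *)

theory Defs
  imports "HOL-Analysis.Analysis" "HOL-Computational_Algebra.Polynomial"
begin

definition homog_poly_fun :: "nat \<Rightarrow> ('a::euclidean_space \<Rightarrow> real) \<Rightarrow> bool" where
  "homog_poly_fun d f \<longleftrightarrow>
     (\<exists>c :: ('a \<Rightarrow> nat) \<Rightarrow> real.
        finite {\<alpha>. c \<alpha> \<noteq> 0} \<and>
        (\<forall>\<alpha>. c \<alpha> \<noteq> 0 \<longrightarrow> (\<forall>b. b \<notin> Basis \<longrightarrow> \<alpha> b = 0) \<and> (\<Sum>b\<in>Basis. \<alpha> b) = d) \<and>
        (\<forall>x. f x = (\<Sum>\<alpha>\<in>{\<alpha>. c \<alpha> \<noteq> 0}. c \<alpha> * (\<Prod>b\<in>Basis. (x \<bullet> b) ^ \<alpha> b))))"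

definition hyperbolic :: "('a::euclidean_space \<Rightarrow> real) \<Rightarrow> 'a \<Rightarrow> bool" where
  "hyperbolic h e \<longleftrightarrow>
     (\<exists>d. homog_poly_fun d h) \<and> h e \<noteq> 0 \<and>
     (\<forall>x. \<exists>p :: real poly. (\<forall>t. poly p t = h (t *\<^sub>R e - x)) \<and>
            (\<forall>z::complex. poly (map_poly complex_of_real p) z = 0 \<longrightarrow> z \<in> \<real>))"

definition eigenvalues :: "('a::euclidean_space \<Rightarrow> real) \<Rightarrow> 'a \<Rightarrow> 'a \<Rightarrow> real set" where
  "eigenvalues h e x = {t. h (t *\<^sub>R e - x) = 0}"

definition hcone_open :: "('a::euclidean_space \<Rightarrow> real) \<Rightarrow> 'a \<Rightarrow> 'a set" where
  "hcone_open h e = {x. \<forall>s\<in>eigenvalues h e x. s > 0}"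

definition hcone_closed :: "('a::euclidean_space \<Rightarrow> real) \<Rightarrow> 'a \<Rightarrow> 'a set" where
  "hcone_closed h e = {x. \<forall>s\<in>eigenvalues h e x. s \<ge> 0}"

definition hop :: "('m::finite \<Rightarrow> real^'n) \<Rightarrow> 'm
     \<Rightarrow> ((real^'n) \<times> (real^'m) \<Rightarrow> real) \<Rightarrow> ((real^'n) \<times> (real^'m) \<Rightarrow> real)" where
  "hop vs j F = (\<lambda>z. F z - (snd z $ j) * frechet_derivative F (at z) (vs j, 0))"

text \<open>h[v_1,...,v_m] = prod_j (1 - y_j D_{v_j}) h(x); the operators commute,
  so we apply them along an arbitrary fixed enumeration of the index type.\<close>
definition hbracket :: "(real^'n \<Rightarrow> real) \<Rightarrow> ('m::finite \<Rightarrow> real^'n)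
     \<Rightarrow> ((real^'n) \<times> (real^'m) \<Rightarrow> real)" where
  "hbracket h vs =
     foldr (hop vs) (SOME l. distinct l \<and> set l = (UNIV :: 'm set)) (\<lambda>z. h (fst z))"

end

theory Submission
  imports Defs "HOL-Complex_Analysis.Complex_Analysis" "HOL-Computational_Algebra.Fundamental_Theorem_Algebra"
begin

type_synonym 'a mlist = "(real \<times> ('a \<Rightarrow> nat)) list"

definition mon :: "('a::euclidean_space \<Rightarrow> nat) \<Rightarrow> ('a \<Rightarrow> 'b::comm_ring_1) \<Rightarrow> 'b" where
  "mon \<alpha> g = (\<Prod>b\<in>Basis. g b ^ \<alpha> b)"

definition cF :: "'a::euclidean_space mlist \<Rightarrow> ('a \<Rightarrow> complex) \<Rightarrow> complex" where
  "cF L g = (\<Sum>(c,\<alpha>)\<leftarrow>L. of_real c * mon \<alpha> g)"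

definition rF :: "'a::euclidean_space mlist \<Rightarrow> 'a \<Rightarrow> real" where
  "rF L x = (\<Sum>(c,\<alpha>)\<leftarrow>L. c * mon \<alpha> (\<lambda>b. x \<bullet> b))"

definition emb :: "'a::euclidean_space \<Rightarrow> 'a \<Rightarrow> complex" where
  "emb x = (\<lambda>b. of_real (x \<bullet> b))"

definition valid :: "'a::euclidean_space mlist \<Rightarrow> nat \<Rightarrow> bool" where
  "valid L d \<longleftrightarrow> (\<forall>(c,\<alpha>)\<in>set L. c \<noteq> 0 \<longrightarrow> (\<Sum>b\<in>Basis. \<alpha> b) = d)"

definition blist :: "'a::euclidean_space list" where
  "blist = (SOME l. distinct l \<and> set l = Basis)"

lemma blist: "distinct (blist::'a::euclidean_space list)" "set (blist::'a list) = Basis"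
proof -
  have "\<exists>l. distinct l \<and> set l = (Basis::'a set)"
    using finite_distinct_list[OF finite_Basis] by blast
  then have "distinct (blist::'a list) \<and> set (blist::'a list) = Basis"
    unfolding blist_def by (rule someI_ex)
  then show "distinct (blist::'a::euclidean_space list)" "set (blist::'a list) = Basis" by auto
qed

lemma sum_blist: "(\<Sum>b\<leftarrow>blist. f b) = (\<Sum>b\<in>Basis. f b)"
  using blist sum_list_distinct_conv_sum_set by metis

definition dl :: "'a::euclidean_space mlist \<Rightarrow> 'a \<Rightarrow> 'a mlist" where
  "dl L w = concat (map (\<lambda>(c,\<alpha>). map (\<lambda>b. (c * real (\<alpha> b) * (w \<bullet> b), \<alpha>(b := \<alpha> b - 1))) blist) L)"

definition stepL :: "'a::euclidean_space mlist \<Rightarrow> 'a \<Rightarrow> 'a \<Rightarrow> 'a mlist" where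
  "stepL L w bl = L @ map (\<lambda>(c,\<alpha>). (- c, \<alpha>(bl := Suc (\<alpha> bl)))) (dl L w)"

lemma cF_Nil[simp]: "cF [] g = 0" and cF_Cons[simp]: "cF ((c,\<alpha>)#L) g = of_real c * mon \<alpha> g + cF L g"
  by (simp_all add: cF_def)
lemma rF_Nil[simp]: "rF [] g = 0" and rF_Cons[simp]: "rF ((c,\<alpha>)#L) g = c * mon \<alpha> (\<lambda>b. g \<bullet> b) + rF L g"
  by (simp_all add: rF_def)
lemma cF_append[simp]: "cF (L1 @ L2) g = cF L1 g + cF L2 g"
  by (simp add: cF_def)
lemma rF_append[simp]: "rF (L1 @ L2) g = rF L1 g + rF L2 g"
  by (simp add: rF_def)

lemma mon_of_real: "mon \<alpha> (\<lambda>b. of_real (f b)) = of_real (mon \<alpha> f)"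
  by (simp add: mon_def)

lemma cF_emb: "cF L (emb x) = of_real (rF L x)"
  by (induction L) (auto simp: emb_def mon_of_real)

lemma mon_scale: "mon \<alpha> (\<lambda>b. k * g b) = k ^ (\<Sum>b\<in>Basis. \<alpha> b) * mon \<alpha> g"
  by (simp add: mon_def power_mult_distrib prod.distrib power_sum)

lemma valid_Cons: "valid ((c,\<alpha>)#L) d \<longleftrightarrow> (c \<noteq> 0 \<longrightarrow> (\<Sum>b\<in>Basis. \<alpha> b) = d) \<and> valid L d"
  by (auto simp: valid_def)

lemma cF_hom: "valid L d \<Longrightarrow> cF L (\<lambda>b. k * g b) = k ^ d * cF L g"
  by (induction L) (auto simp: valid_Cons mon_scale algebra_simps)

lemma rF_hom: "valid L d \<Longrightarrow> rF L (k *\<^sub>R x) = k ^ d * rF L x"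
proof (induction L)
  case (Cons a L) then show ?case
    using mon_scale[of _ k "\<lambda>b. x \<bullet> b"]
    by (cases a) (auto simp: valid_Cons algebra_simps)
qed simp

lemma cF_cnj: "cF L (\<lambda>b. cnj (g b)) = cnj (cF L g)"
  by (induction L) (auto simp: mon_def)

lemma cF_cong: "(\<And>b. b \<in> Basis \<Longrightarrow> g b = g' b) \<Longrightarrow> cF L g = cF L g'"
  unfolding cF_def mon_def by (intro arg_cong[where f=sum_list] map_cong refl) (auto intro!: prod.cong)

lemma valid0_cF: "valid L 0 \<Longrightarrow> cF L g = cF L g'"
proof (induction L)
  case (Cons a L) then show ?case
    by (cases a) (auto simp: valid_Cons mon_def)
qed simp

lemma valid0_rF: "valid L 0 \<Longrightarrow> rF L x = rF L y"
  using valid0_cF[of L "emb x" "emb y"] by (simp add: cF_emb)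


definition cpoly :: "'a::euclidean_space mlist \<Rightarrow> ('a \<Rightarrow> complex) \<Rightarrow> ('a \<Rightarrow> complex) \<Rightarrow> complex poly" where
  "cpoly L A W = (\<Sum>(c,\<alpha>)\<leftarrow>L. smult (of_real c) (\<Prod>b\<in>Basis. [:A b, W b:] ^ \<alpha> b))"

definition rpoly :: "'a::euclidean_space mlist \<Rightarrow> 'a \<Rightarrow> 'a \<Rightarrow> real poly" where
  "rpoly L a w = (\<Sum>(c,\<alpha>)\<leftarrow>L. smult c (\<Prod>b\<in>Basis. [:a \<bullet> b, w \<bullet> b:] ^ \<alpha> b))"

lemma poly_cpoly: "poly (cpoly L A W) z = cF L (\<lambda>b. A b + z * W b)"
  by (induction L) (auto simp: cpoly_def poly_prod mon_def algebra_simps)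

lemma poly_rpoly: "poly (rpoly L a w) t = rF L (a + t *\<^sub>R w)"
  by (induction L) (auto simp: rpoly_def poly_prod mon_def algebra_simps inner_add_left)

lemma poly_eq_inf:
  fixes p q :: "'b::idom poly"
  assumes "infinite S" "\<And>x. x \<in> S \<Longrightarrow> poly p x = poly q x"
  shows "p = q"
proof (rule ccontr)
  assume "p \<noteq> q"
  then have "finite {x. poly (p - q) x = 0}" by (intro poly_roots_finite) simp
  moreover have "S \<subseteq> {x. poly (p - q) x = 0}" using assms(2) by auto
  ultimately show False using assms(1) finite_subset by blast
qed

lemma infinite_Reals: "infinite (\<real> :: complex set)"
proof
  assume "finite (\<real> :: complex set)"
  then have "finite (Re ` \<real>)" by simp
  moreover have "Re ` \<real> = UNIV"
    by (auto simp: image_iff) (metis Re_complex_of_real Reals_of_real)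
  ultimately show False by (simp add: infinite_UNIV_char_0)
qed

lemma poly_map_of_real: "poly (map_poly of_real p) (of_real x) = (of_real (poly p x) :: 'a::{real_algebra_1,comm_semiring_0})"
  by (induction p) (auto simp: map_poly_pCons)

lemma real_poly_complex:
  fixes p :: "real poly"
  assumes "\<And>t. poly p t = rF L (a + t *\<^sub>R w)"
  shows "poly (map_poly of_real p) z = cF L (\<lambda>b. emb a b + z * emb w b)"
proof -
  have "map_poly of_real p = cpoly L (emb a) (emb w)"
  proof (rule poly_eq_inf[OF infinite_Reals])
    fix x :: complex assume "x \<in> \<real>"
    then obtain t where x: "x = of_real t" by (auto elim: Reals_cases)
    have "cF L (\<lambda>b. emb a b + x * emb w b) = cF L (emb (a + t *\<^sub>R w))"
      by (rule cF_cong) (simp add: emb_def x inner_add_left)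
    then show "poly (map_poly of_real p) x = poly (cpoly L (emb a) (emb w)) x"
      by (simp add: x poly_cpoly cF_emb assms poly_map_of_real)
  qed
  then show ?thesis by (simp add: poly_cpoly)
qed

lemma mon_upd: "b \<in> Basis \<Longrightarrow> mon (\<alpha>(b := n)) X = X b ^ n * (\<Prod>j\<in>Basis - {b}. X j ^ \<alpha> j)"
  unfolding mon_def by (subst prod.remove[of _ b]) (auto intro!: prod.cong)

lemma mon_deriv_sum:
  fixes X W :: "'a::euclidean_space \<Rightarrow> 'b::comm_ring_1"
  shows "(\<Sum>b\<in>Basis. (of_nat (\<alpha> b) * X b ^ (\<alpha> b - 1) * W b) * (\<Prod>j\<in>Basis - {b}. X j ^ \<alpha> j))
       = (\<Sum>b\<in>Basis. of_nat (\<alpha> b) * W b * mon (\<alpha>(b := \<alpha> b - 1)) X)"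
  by (intro sum.cong refl) (simp add: mon_upd algebra_simps)

lemma cF_map: "cF (map (\<lambda>b. (C b, A b)) xs) X = (\<Sum>b\<leftarrow>xs. of_real (C b) * mon (A b) X)"
  by (induction xs) auto

lemma rF_map: "rF (map (\<lambda>b. (C b, A b)) xs) x = (\<Sum>b\<leftarrow>xs. C b * mon (A b) (\<lambda>b. x \<bullet> b))"
  by (induction xs) auto

lemma dl_Nil[simp]: "dl [] w = []" and
  dl_Cons: "dl ((c,\<alpha>)#L) w = map (\<lambda>b. (c * real (\<alpha> b) * (w \<bullet> b), \<alpha>(b := \<alpha> b - 1))) blist @ dl L w"
  by (simp_all add: dl_def)

lemma cF_dl_Cons: "cF (dl ((c,\<alpha>)#L) w) X =
    of_real c * (\<Sum>b\<in>Basis. of_nat (\<alpha> b) * emb w b * mon (\<alpha>(b := \<alpha> b - 1)) X) + cF (dl L w) X"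
  by (simp add: dl_Cons cF_map sum_blist sum_distrib_left emb_def algebra_simps)

lemma rF_dl_Cons: "rF (dl ((c,\<alpha>)#L) w) x =
    c * (\<Sum>b\<in>Basis. of_nat (\<alpha> b) * (w \<bullet> b) * mon (\<alpha>(b := \<alpha> b - 1)) (\<lambda>b. x \<bullet> b)) + rF (dl L w) x"
  by (simp add: dl_Cons rF_map sum_blist sum_distrib_left algebra_simps)

lemma deriv_cF:
  "((\<lambda>\<beta>. cF L (\<lambda>k. g k + \<beta> * emb w k)) has_field_derivative
      cF (dl L w) (\<lambda>k. g k + \<beta>0 * emb w k)) (at \<beta>0)"
proof (induction L)
  case Nil then show ?case by simp
next
  case (Cons a L)
  obtain c \<alpha> where a: "a = (c, \<alpha>)" by fastforce
  have "((\<lambda>\<beta>. mon \<alpha> (\<lambda>k. g k + \<beta> * emb w k)) has_field_derivative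
     (\<Sum>b\<in>Basis. (of_nat (\<alpha> b) * (g b + \<beta>0 * emb w b) ^ (\<alpha> b - 1) * emb w b) *
        (\<Prod>j\<in>Basis - {b}. (g j + \<beta>0 * emb w j) ^ \<alpha> j))) (at \<beta>0)"
    unfolding mon_def
    by (rule has_field_derivative_prod) (auto intro!: derivative_eq_intros)
  then have "((\<lambda>\<beta>. mon \<alpha> (\<lambda>k. g k + \<beta> * emb w k)) has_field_derivative
     (\<Sum>b\<in>Basis. of_nat (\<alpha> b) * emb w b * mon (\<alpha>(b := \<alpha> b - 1)) (\<lambda>k. g k + \<beta>0 * emb w k))) (at \<beta>0)"
    by (simp only: mon_deriv_sum)
  then show ?case
    using Cons by (auto simp: a cF_dl_Cons intro!: derivative_eq_intros)
qed

lemma pderiv_cpoly: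
  "poly (pderiv (cpoly L g (emb w))) \<beta>0 = cF (dl L w) (\<lambda>k. g k + \<beta>0 * emb w k)"
proof -
  have "((\<lambda>\<beta>. poly (cpoly L g (emb w)) \<beta>) has_field_derivative
      cF (dl L w) (\<lambda>k. g k + \<beta>0 * emb w k)) (at \<beta>0)"
    by (simp add: poly_cpoly deriv_cF)
  then show ?thesis using poly_DERIV DERIV_unique by blast
qed

lemma deriv_rF: "(rF L has_derivative (\<lambda>v. rF (dl L v) x)) (at x)"
proof (induction L)
  case Nil then show ?case by (simp add: rF_def[abs_def])
next
  case (Cons a L)
  obtain c \<alpha> where a: "a = (c, \<alpha>)" by fastforce
  have "((\<lambda>x. mon \<alpha> (\<lambda>b. x \<bullet> b)) has_derivative
     (\<lambda>v. \<Sum>b\<in>Basis. (of_nat (\<alpha> b) * (x \<bullet> b) ^ (\<alpha> b - 1) * (v \<bullet> b)) *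
        (\<Prod>j\<in>Basis - {b}. (x \<bullet> j) ^ \<alpha> j))) (at x)"
    unfolding mon_def
    by (rule has_derivative_prod) (auto intro!: derivative_eq_intros)
  then have "((\<lambda>x. mon \<alpha> (\<lambda>b. x \<bullet> b)) has_derivative
     (\<lambda>v. \<Sum>b\<in>Basis. of_nat (\<alpha> b) * (v \<bullet> b) * mon (\<alpha>(b := \<alpha> b - 1)) (\<lambda>b. x \<bullet> b))) (at x)"
    by (simp only: mon_deriv_sum)
  moreover have "rF (a # L) = (\<lambda>x. c * mon \<alpha> (\<lambda>b. x \<bullet> b) + rF L x)"
    by (auto simp: a)
  ultimately show ?case
    using Cons by (auto simp: a rF_dl_Cons intro!: derivative_eq_intros)
qed

lemma frechet_rF: "frechet_derivative (rF L) (at x) v = rF (dl L v) x"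
  using frechet_derivative_at[OF deriv_rF[of L x]] by metis

lemma root_factor:
  fixes f :: "complex poly"
  assumes "degree f > 0"
  obtains \<beta> g where "poly f \<beta> = 0" "f = [:-\<beta>, 1:] * g" "degree g < degree f" "g \<noteq> 0"
proof -
  have "\<not> constant (poly f)" using assms constant_degree[of f] by simp
  then obtain \<beta> where r: "poly f \<beta> = 0" using Fundamental_Theorem_Algebra.fundamental_theorem_of_algebra by blast
  have "[:-\<beta>, 1:] dvd f" using r poly_eq_0_iff_dvd by blast
  then obtain g where f: "f = [:-\<beta>, 1:] * g" by (elim dvdE)
  have "f \<noteq> 0" using assms by auto
  then have "g \<noteq> 0" using f by auto
  have "degree f = degree [:-\<beta>, 1:] + degree g" unfolding f
    by (rule degree_mult_eq) (use \<open>g \<noteq> 0\<close> in auto)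
  then have "degree f = 1 + degree g" by simp
  then show ?thesis using that[OF r f _ \<open>g \<noteq> 0\<close>] by linarith
qed

lemma ratio_step:
  fixes g :: "complex poly"
  assumes "\<beta> \<noteq> 0" "poly g 0 \<noteq> 0"
  shows "poly (pderiv ([:-\<beta>, 1:] * g)) 0 / poly ([:-\<beta>, 1:] * g) 0
      = - 1 / \<beta> + poly (pderiv g) 0 / poly g 0"
proof -
  have d: "pderiv [:-\<beta>, 1:] = 1" by (simp add: pderiv_pCons)
  have "poly (pderiv ([:-\<beta>, 1:] * g)) 0 = - \<beta> * poly (pderiv g) 0 + poly g 0"
    by (simp only: pderiv_mult d poly_add poly_mult) simp
  moreover have "poly ([:-\<beta>, 1:] * g) 0 = - \<beta> * poly g 0"
    by (simp only: poly_mult) simp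
  ultimately show ?thesis using assms by (simp add: field_simps)
qed

lemma PL1core:
  fixes f :: "complex poly"
  shows "(\<forall>b. Im b \<ge> 0 \<longrightarrow> poly f b \<noteq> 0) \<Longrightarrow> degree f = 0 \<or> Im (poly (pderiv f) 0 / poly f 0) < 0"
proof (induction "degree f" arbitrary: f rule: less_induct)
  case less
  show ?case
  proof (cases "degree f = 0")
    case False
    then obtain \<beta> g where r: "poly f \<beta> = 0" and f: "f = [:-\<beta>, 1:] * g"
      and dg: "degree g < degree f" and g0: "g \<noteq> 0" by (auto elim: root_factor)
    have "Im \<beta> < 0" using less.prems r by (meson not_le)
    then have b0: "\<beta> \<noteq> 0" by auto
    have hg: "\<forall>b. Im b \<ge> 0 \<longrightarrow> poly g b \<noteq> 0" using less.prems f by auto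
    then have pg0: "poly g 0 \<noteq> 0" by auto
    have "(Re \<beta>)^2 + (Im \<beta>)^2 > 0" using \<open>Im \<beta> < 0\<close>
      by (simp add: add_nonneg_pos)
    then have im: "Im (- 1 / \<beta>) < 0" using \<open>Im \<beta> < 0\<close>
      by (simp add: Im_divide divide_neg_pos)
    from less.hyps[OF dg hg] have "degree g = 0 \<or> Im (poly (pderiv g) 0 / poly g 0) < 0" .
    then have "Im (poly (pderiv g) 0 / poly g 0) \<le> 0"
      by (auto simp: pderiv_eq_0_iff[THEN iffD2])
    then show ?thesis using im ratio_step[OF b0 pg0] f by simp
  qed simp
qed

lemma PL1:
  fixes f :: "complex poly"
  assumes "\<forall>b. Im b \<ge> 0 \<longrightarrow> poly f b \<noteq> 0"
  shows "poly f 0 + of_real c * poly (pderiv f) 0 \<noteq> 0"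
proof
  assume eq: "poly f 0 + of_real c * poly (pderiv f) 0 = 0"
  have f0: "poly f 0 \<noteq> 0" using assms by auto
  from PL1core[OF assms] show False
  proof
    assume "degree f = 0"
    then have "pderiv f = 0" by (simp add: pderiv_eq_0_iff)
    then show False using eq f0 by simp
  next
    define X where "X = poly (pderiv f) 0 / poly f 0"
    assume im: "Im (poly (pderiv f) 0 / poly f 0) < 0"
    then have im: "Im X < 0" by (simp add: X_def)
    have "poly f 0 * (1 + of_real c * X) = 0" using eq f0 by (simp add: X_def field_simps)
    then have "1 + of_real c * X = 0" using f0 by simp
    then have "Im (of_real c * X) = 0" "Re (of_real c * X) = -1"
      by (simp_all add: complex_eq_iff)
    then have "c * Im X = 0" "c * Re X = -1" by simp_all
    then show False using im by auto
  qed
qed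

lemma PL2:
  fixes f :: "complex poly"
  shows "(\<forall>b. Re b \<ge> 0 \<longrightarrow> poly f b \<noteq> 0) \<Longrightarrow> Re (poly (pderiv f) 0 / poly f 0) \<ge> 0"
proof (induction "degree f" arbitrary: f rule: less_induct)
  case less
  show ?case
  proof (cases "degree f = 0")
    case True
    then have "pderiv f = 0" by (simp add: pderiv_eq_0_iff)
    then show ?thesis by simp
  next
    case False
    then obtain \<beta> g where r: "poly f \<beta> = 0" and f: "f = [:-\<beta>, 1:] * g"
      and dg: "degree g < degree f" and g0: "g \<noteq> 0" by (auto elim: root_factor)
    have "Re \<beta> < 0" using less.prems r by (meson not_le)
    then have b0: "\<beta> \<noteq> 0" by auto
    have hg: "\<forall>b. Re b \<ge> 0 \<longrightarrow> poly g b \<noteq> 0" using less.prems f by auto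
    then have pg0: "poly g 0 \<noteq> 0" by auto
    have re: "Re (- 1 / \<beta>) \<ge> 0" using \<open>Re \<beta> < 0\<close>
      by (simp add: Re_divide divide_nonpos_nonneg)
    from less.hyps[OF dg hg] have "Re (poly (pderiv g) 0 / poly g 0) \<ge> 0" .
    then show ?thesis using re ratio_step[OF b0 pg0] f by simp
  qed
qed


lemma cont_cF:
  assumes "\<And>b. b \<in> Basis \<Longrightarrow> continuous_on S (\<lambda>s. G s b)"
  shows "continuous_on S (\<lambda>s. cF L (G s))"
proof (induction L)
  case Nil then show ?case by simp
next
  case (Cons a L)
  obtain c \<alpha> where a: "a = (c, \<alpha>)" by fastforce
  show ?case using Cons assms unfolding a cF_Cons mon_def
    by (intro continuous_intros) auto
qed

lemma cont_P:
  fixes A :: "real \<Rightarrow> 'a::euclidean_space \<Rightarrow> complex"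
  assumes "\<And>k. k \<in> Basis \<Longrightarrow> continuous_on {0..1} (\<lambda>\<theta>. A \<theta> k)"
  shows "continuous_on ({0..1::real} \<times> T) (\<lambda>p. cF L (\<lambda>k. A (fst p) k + snd p * U k))"
proof (rule cont_cF)
  fix k :: 'a assume k: "k \<in> Basis"
  have "continuous_on ({0..1::real} \<times> T) (\<lambda>p. A (fst p) k)"
    by (rule continuous_on_compose2[OF assms[OF k] continuous_on_fst]) auto
  then show "continuous_on ({0..1::real} \<times> T) (\<lambda>p. A (fst p) k + snd p * U k)"
    by (intro continuous_intros)
qed

lemma cont_Q:
  fixes A :: "real \<Rightarrow> 'a::euclidean_space \<Rightarrow> complex"
  assumes "\<And>k. k \<in> Basis \<Longrightarrow> continuous_on {0..1} (\<lambda>\<theta>. A \<theta> k)"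
  shows "continuous_on ({0..1::real} \<times> T) (\<lambda>p. cF L (\<lambda>k. snd p * A (fst p) k + U k))"
proof (rule cont_cF)
  fix k :: 'a assume k: "k \<in> Basis"
  have "continuous_on ({0..1::real} \<times> T) (\<lambda>p. A (fst p) k)"
    by (rule continuous_on_compose2[OF assms[OF k] continuous_on_fst]) auto
  then show "continuous_on ({0..1::real} \<times> T) (\<lambda>p. snd p * A (fst p) k + U k)"
    by (intro continuous_intros)
qed

lemma growth:
  fixes A :: "real \<Rightarrow> 'a::euclidean_space \<Rightarrow> complex"
  assumes V: "valid L d" and U: "cF L U \<noteq> 0"
    and contA: "\<And>k. k \<in> Basis \<Longrightarrow> continuous_on {0..1} (\<lambda>\<theta>. A \<theta> k)"
  shows "\<exists>R>0. \<exists>c>0. \<forall>\<theta>\<in>{0..1}. \<forall>\<zeta>. norm \<zeta> \<ge> R \<longrightarrow>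
            norm (cF L (\<lambda>k. A \<theta> k + \<zeta> * U k)) \<ge> c * norm \<zeta> ^ d"
proof -
  define Q where "Q = (\<lambda>p::real\<times>complex. cF L (\<lambda>k. snd p * A (fst p) k + U k))"
  define K where "K = {0..1::real} \<times> cball (0::complex) 1"
  have "continuous_on K Q" unfolding Q_def K_def by (rule cont_Q[OF contA])
  moreover have "compact K" unfolding K_def by (intro compact_Times compact_cball compact_Icc)
  ultimately have uc: "uniformly_continuous_on K Q" by (rule compact_uniformly_continuous)
  define e where "e = norm (cF L U) / 2"
  have e: "e > 0" using U by (simp add: e_def)
  obtain \<delta> where \<delta>: "\<delta> > 0" and uc': "\<And>x x'. x \<in> K \<Longrightarrow> x' \<in> K \<Longrightarrow> dist x' x < \<delta> \<Longrightarrow> dist (Q x') (Q x) < e"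
    using uc e unfolding uniformly_continuous_on_def by blast
  define \<delta>' where "\<delta>' = min \<delta> 1 / 2"
  have \<delta>': "\<delta>' > 0" "\<delta>' < \<delta>" "\<delta>' < 1" using \<delta> by (auto simp: \<delta>'_def)
  have "\<forall>\<theta>\<in>{0..1}. \<forall>\<zeta>. norm \<zeta> \<ge> 1/\<delta>' \<longrightarrow>
            norm (cF L (\<lambda>k. A \<theta> k + \<zeta> * U k)) \<ge> e * norm \<zeta> ^ d"
  proof (intro ballI allI impI)
    fix \<theta> :: real and \<zeta> :: complex
    assume th: "\<theta> \<in> {0..1}" and z: "1/\<delta>' \<le> norm \<zeta>"
    have "1/\<delta>' > 0" using \<delta>' by simp
    then have nz: "norm \<zeta> > 0" using z by linarith
    then have z0: "\<zeta> \<noteq> 0" by auto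
    define \<rho> where "\<rho> = 1 / \<zeta>"
    have "norm \<rho> \<le> \<delta>'" using z nz \<delta>' by (simp add: \<rho>_def norm_divide field_simps)
    then have nr: "norm \<rho> < \<delta>" "norm \<rho> \<le> 1" using \<delta>' by auto
    have in1: "(\<theta>, \<rho>) \<in> K" "(\<theta>, 0) \<in> K" using th nr by (auto simp: K_def)
    have "dist (\<theta>, \<rho>) (\<theta>, 0) < \<delta>" using nr by (simp add: dist_Pair_Pair)
    then have "dist (Q (\<theta>, \<rho>)) (Q (\<theta>, 0)) < e" using uc' in1 by blast
    moreover have "Q (\<theta>, 0) = cF L U" by (simp add: Q_def)
    moreover have "norm (cF L U) - norm (Q (\<theta>, \<rho>)) \<le> norm (Q (\<theta>, \<rho>) - cF L U)"
      using norm_triangle_ineq2[of "cF L U" "Q (\<theta>, \<rho>)"] by (simp add: norm_minus_commute)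
    ultimately have "norm (Q (\<theta>, \<rho>)) \<ge> e" unfolding e_def dist_norm by simp
    have "cF L (\<lambda>k. A \<theta> k + \<zeta> * U k) = cF L (\<lambda>k. \<zeta> * (\<rho> * A \<theta> k + U k))"
      by (rule cF_cong) (simp add: \<rho>_def z0 algebra_simps)
    also have "\<dots> = \<zeta> ^ d * Q (\<theta>, \<rho>)" by (simp add: cF_hom[OF V] Q_def)
    finally have "norm (cF L (\<lambda>k. A \<theta> k + \<zeta> * U k)) = norm \<zeta> ^ d * norm (Q (\<theta>, \<rho>))"
      by (simp add: norm_mult norm_power)
    then show "e * norm \<zeta> ^ d \<le> norm (cF L (\<lambda>k. A \<theta> k + \<zeta> * U k))"
    proof -
      have "norm \<zeta> ^ d * e \<le> norm \<zeta> ^ d * norm (Q (\<theta>, \<rho>))"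
        using \<open>norm (Q (\<theta>, \<rho>)) \<ge> e\<close> by (intro mult_left_mono) auto
      then show ?thesis using \<open>norm (cF L (\<lambda>k. A \<theta> k + \<zeta> * U k)) = _\<close>
        by (simp add: mult.commute)
    qed
  qed
  then show ?thesis using \<delta>' e by (intro exI[of _ "1/\<delta>'"] exI[of _ e]) auto
qed

lemma ulim:
  fixes P :: "real \<times> complex \<Rightarrow> complex"
  assumes contP: "continuous_on ({0..1} \<times> UNIV) P"
    and th: "\<And>n. \<theta>n n \<in> {0..1}" and lim: "\<theta>n \<longlonglongrightarrow> \<theta>0" and th0: "\<theta>0 \<in> {0..1}"
    and K: "compact K"
  shows "uniform_limit K (\<lambda>n \<zeta>. P (\<theta>n n, \<zeta>)) (\<lambda>\<zeta>. P (\<theta>0, \<zeta>)) sequentially"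
proof -
  have "uniformly_continuous_on ({0..1} \<times> K) P"
    by (intro compact_uniformly_continuous compact_Times compact_Icc K continuous_on_subset[OF contP]) auto
  then have uc: "\<forall>e>0. \<exists>d>0. \<forall>x\<in>{0..1} \<times> K. \<forall>x'\<in>{0..1} \<times> K. dist x' x < d \<longrightarrow> dist (P x') (P x) < e"
    unfolding uniformly_continuous_on_def .
  show ?thesis unfolding uniform_limit_iff
  proof (intro allI impI)
    fix e :: real assume e: "e > 0"
    obtain d where d: "d > 0" and dd: "\<forall>x\<in>{0..1} \<times> K. \<forall>x'\<in>{0..1} \<times> K. dist x' x < d \<longrightarrow> dist (P x') (P x) < e"
      using uc e by blast
    have "\<forall>\<^sub>F n in sequentially. dist (\<theta>n n) \<theta>0 < d" using lim d by (rule tendstoD)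
    then show "\<forall>\<^sub>F n in sequentially. \<forall>x\<in>K. dist (P (\<theta>n n, x)) (P (\<theta>0, x)) < e"
    proof (rule eventually_mono)
      fix n assume n: "dist (\<theta>n n) \<theta>0 < d"
      show "\<forall>x\<in>K. dist (P (\<theta>n n, x)) (P (\<theta>0, x)) < e"
      proof
        fix x assume x: "x \<in> K"
        have "dist (\<theta>n n, x) (\<theta>0, x) < d" using n by (simp add: dist_Pair_Pair)
        then show "dist (P (\<theta>n n, x)) (P (\<theta>0, x)) < e" using dd th th0 x by auto
      qed
    qed
  qed
qed

lemma holo_P: "(\<lambda>\<zeta>. cF L (\<lambda>k. A k + \<zeta> * U k)) holomorphic_on S"
proof -
  have "(\<lambda>\<zeta>. poly (cpoly L A U) \<zeta>) holomorphic_on S" by (intro holomorphic_intros)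
  then show ?thesis by (simp add: poly_cpoly)
qed

lemma hurwitz_step:
  fixes A :: "real \<Rightarrow> 'a::euclidean_space \<Rightarrow> complex"
  assumes V: "valid L d" and d: "d \<ge> 1" and U: "cF L U \<noteq> 0"
    and contA: "\<And>k. k \<in> Basis \<Longrightarrow> continuous_on {0..1} (\<lambda>\<theta>. A \<theta> k)"
    and th: "\<And>n. \<theta>n n \<in> {0..1}" and lim: "\<theta>n \<longlonglongrightarrow> \<theta>0" and th0: "\<theta>0 \<in> {0..1}"
    and nz: "\<And>n \<zeta>. Im \<zeta> > 0 \<Longrightarrow> cF L (\<lambda>k. A (\<theta>n n) k + \<zeta> * U k) \<noteq> 0"
    and z: "Im \<zeta> > 0"
  shows "cF L (\<lambda>k. A \<theta>0 k + \<zeta> * U k) \<noteq> 0"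
proof -
  obtain R c where R: "R > 0" and c: "c > 0" and gr: "\<forall>\<theta>\<in>{0..1}. \<forall>\<zeta>. norm \<zeta> \<ge> R \<longrightarrow>
            norm (cF L (\<lambda>k. A \<theta> k + \<zeta> * U k)) \<ge> c * norm \<zeta> ^ d"
    using growth[OF V U, of A] contA by blast
  define g where "g = (\<lambda>\<zeta>. cF L (\<lambda>k. A \<theta>0 k + \<zeta> * U k))"
  have nc: "\<not> g constant_on {z. 0 < Im z}"
  proof
    assume "g constant_on {z. 0 < Im z}"
    then obtain y where y: "\<And>z. 0 < Im z \<Longrightarrow> g z = y" by (auto simp: constant_on_def)
    define r where "r = R + norm y / c + 1"
    have r: "r \<ge> R" "r \<ge> 1" "r > norm y / c" using R c by (auto simp: r_def)
    define z where "z = \<i> * of_real r"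
    have nzr: "norm z = r" using r R by (simp add: z_def norm_mult)
    have "Im z > 0" using r R by (simp add: z_def)
    then have "g z = y" by (rule y)
    moreover have "c * norm z ^ d \<le> norm (cF L (\<lambda>k. A \<theta>0 k + z * U k))"
      using gr th0 r(1) nzr by auto
    ultimately have "norm y \<ge> c * r ^ d" using nzr by (simp add: g_def)
    moreover have "r ^ 1 \<le> r ^ d" by (rule power_increasing[OF d r(2)])
    then have "c * r \<le> c * r ^ d" using c by (simp add: mult_left_mono)
    ultimately have "norm y \<ge> c * r" by linarith
    moreover have "c * r > norm y" using r c by (simp add: field_simps)
    ultimately show False by simp
  qed
  have cP: "continuous_on ({0..1} \<times> UNIV) (\<lambda>p. cF L (\<lambda>k. A (fst p) k + snd p * U k))"
    by (rule cont_P) (rule contA)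
  have "g \<zeta> \<noteq> 0"
  proof (rule Hurwitz_no_zeros[of "{z. 0 < Im z}" "\<lambda>n \<zeta>. cF L (\<lambda>k. A (\<theta>n n) k + \<zeta> * U k)" g])
    show "open {z. 0 < Im z}" by (rule open_halfspace_Im_gt)
    show "connected {z. 0 < Im z}" by blast
    show "\<And>n. (\<lambda>\<zeta>. cF L (\<lambda>k. A (\<theta>n n) k + \<zeta> * U k)) holomorphic_on {z. 0 < Im z}" by (rule holo_P)
    show "g holomorphic_on {z. 0 < Im z}" unfolding g_def by (rule holo_P)
    show "\<not> g constant_on {z. 0 < Im z}" by (rule nc)
    show "\<And>n z. z \<in> {z. 0 < Im z} \<Longrightarrow> cF L (\<lambda>k. A (\<theta>n n) k + z * U k) \<noteq> 0" using nz by auto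
    show "\<zeta> \<in> {z. 0 < Im z}" using z by simp
    fix K :: "complex set" assume "compact K" "K \<subseteq> {z. 0 < Im z}"
    show "uniform_limit K (\<lambda>n \<zeta>. cF L (\<lambda>k. A (\<theta>n n) k + \<zeta> * U k)) g sequentially"
      using ulim[OF cP th lim th0 \<open>compact K\<close>]
      unfolding g_def by simp
  qed
  then show ?thesis by (simp add: g_def)
qed


lemma HC:
  fixes A :: "real \<Rightarrow> 'a::euclidean_space \<Rightarrow> complex"
  assumes V: "valid L d" and d: "d \<ge> 1" and U: "cF L U \<noteq> 0"
    and contA: "\<And>k. k \<in> Basis \<Longrightarrow> continuous_on {0..1} (\<lambda>\<theta>. A \<theta> k)"
    and bdry: "\<And>\<theta> \<zeta>. \<theta> \<in> {0..1} \<Longrightarrow> Im \<zeta> = 0 \<Longrightarrow> cF L (\<lambda>k. A \<theta> k + \<zeta> * U k) \<noteq> 0"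
    and init: "\<And>\<zeta>. Im \<zeta> \<ge> 0 \<Longrightarrow> cF L (\<lambda>k. A 0 k + \<zeta> * U k) \<noteq> 0"
    and th: "\<theta> \<in> {0..1}" and z: "Im \<zeta> \<ge> 0"
  shows "cF L (\<lambda>k. A \<theta> k + \<zeta> * U k) \<noteq> 0"
proof -
  obtain R c where R: "R > 0" and c: "c > 0" and gr: "\<forall>\<theta>\<in>{0..1}. \<forall>\<zeta>. norm \<zeta> \<ge> R \<longrightarrow>
            norm (cF L (\<lambda>k. A \<theta> k + \<zeta> * U k)) \<ge> c * norm \<zeta> ^ d"
    using growth[OF V U, of A] contA by blast
  define P where "P = (\<lambda>p. cF L (\<lambda>k. A (fst p) k + snd p * U k))"
  have cP: "continuous_on ({0..1} \<times> UNIV) P"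
    unfolding P_def by (rule cont_P) (rule contA)
  define S where "S = {\<theta> \<in> {0..1}. \<exists>\<zeta>. Im \<zeta> \<ge> 0 \<and> P (\<theta>, \<zeta>) = 0}"
  define T where "T = ({0..1} \<times> cball 0 R) \<inter> {p::real\<times>complex. 0 \<le> Im (snd p)}"
  define Z where "Z = {p \<in> T. P p = 0}"
  have "closed {p::real\<times>complex. 0 \<le> Im (snd p)}"
    by (intro closed_Collect_le continuous_intros)
  then have cT: "closed T" unfolding T_def by (intro closed_Int closed_Times closed_atLeastAtMost closed_cball)
  have "continuous_on T P" by (rule continuous_on_subset[OF cP]) (auto simp: T_def)
  then have "closed Z" unfolding Z_def using cT by (rule continuous_closed_preimage_constant)
  moreover have "bounded Z" unfolding Z_def T_def
    by (rule bounded_subset[of "{0..1} \<times> cball 0 R"]) (auto intro: bounded_Times)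
  ultimately have "compact Z" by (simp add: compact_eq_bounded_closed)
  then have "compact (fst ` Z)" by (intro compact_continuous_image continuous_intros)
  moreover have "S = fst ` Z"
  proof
    show "fst ` Z \<subseteq> S" by (auto simp: Z_def S_def T_def)
    show "S \<subseteq> fst ` Z"
    proof
      fix \<theta> assume "\<theta> \<in> S"
      then obtain \<zeta> where th: "\<theta> \<in> {0..1}" and z: "Im \<zeta> \<ge> 0" "P (\<theta>, \<zeta>) = 0" by (auto simp: S_def)
      have "norm \<zeta> \<le> R"
      proof (rule ccontr)
        assume "\<not> norm \<zeta> \<le> R"
        then have "norm (P (\<theta>, \<zeta>)) \<ge> c * norm \<zeta> ^ d" using gr th by (auto simp: P_def)
        moreover have "norm \<zeta> > 0" using R \<open>\<not> norm \<zeta> \<le> R\<close> by linarith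
        then have "c * norm \<zeta> ^ d > 0" using c by simp
        ultimately show False using z by simp
      qed
      then have "(\<theta>, \<zeta>) \<in> Z" using th z by (auto simp: Z_def T_def)
      then show "\<theta> \<in> fst ` Z" by force
    qed
  qed
  ultimately have cS: "closed S" by (simp add: compact_imp_closed)
  have "S = {}"
  proof (rule ccontr)
    assume ne: "S \<noteq> {}"
    have bb: "bdd_below S" by (rule bdd_belowI[of _ 0]) (auto simp: S_def)
    define \<sigma> where "\<sigma> = Inf S"
    have sS: "\<sigma> \<in> S" unfolding \<sigma>_def using closed_contains_Inf[OF ne bb cS] .
    have "0 \<notin> S" using init by (auto simp: S_def P_def)
    then have s0: "\<sigma> > 0" "\<sigma> \<le> 1" using sS by (auto simp: S_def) (metis antisym_conv2)
    define \<theta>n where "\<theta>n = (\<lambda>n. \<sigma> * (1 - inverse (real (Suc (Suc n)))))"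
    have inv: "inverse (real (Suc (Suc n))) > 0" "inverse (real (Suc (Suc n))) \<le> 1" for n
      by (auto simp: field_simps)
    have thn: "\<theta>n n \<in> {0..1}" "\<theta>n n < \<sigma>" for n
      using s0 inv[of n] by (auto simp: \<theta>n_def mult_le_one)
    have "(\<lambda>n. inverse (real (Suc (Suc n)))) \<longlonglongrightarrow> 0"
      by (rule LIMSEQ_Suc[OF LIMSEQ_inverse_real_of_nat])
    then have "(\<lambda>n. \<sigma> * (1 - inverse (real (Suc (Suc n))))) \<longlonglongrightarrow> \<sigma> * (1 - 0)"
      by (intro tendsto_mult tendsto_diff tendsto_const)
    then have lim: "\<theta>n \<longlonglongrightarrow> \<sigma>" unfolding \<theta>n_def by simp
    have nS: "\<theta>n n \<notin> S" for n
    proof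
      assume "\<theta>n n \<in> S"
      then have "\<sigma> \<le> \<theta>n n" unfolding \<sigma>_def by (rule cInf_lower[OF _ bb])
      then show False using thn(2)[of n] by simp
    qed
    have "cF L (\<lambda>k. A \<sigma> k + \<zeta> * U k) \<noteq> 0" if "Im \<zeta> \<ge> 0" for \<zeta>
    proof (cases "Im \<zeta> = 0")
      case True then show ?thesis using bdry s0 by auto
    next
      case False
      then have "Im \<zeta> > 0" using that by simp
      show ?thesis
      proof (rule hurwitz_step[OF V d U contA thn(1) lim])
        show "\<sigma> \<in> {0..1}" using s0 by auto
        show "Im \<zeta> > 0" by fact
        fix n and \<zeta>' :: complex assume "Im \<zeta>' > 0"
        then show "cF L (\<lambda>k. A (\<theta>n n) k + \<zeta>' * U k) \<noteq> 0"
          using nS[of n] thn(1)[of n] by (auto simp: S_def P_def)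
      qed
    qed
    then show False using sS by (auto simp: S_def P_def)
  qed
  then show ?thesis using th z by (auto simp: S_def P_def)
qed

definition Hyp :: "'a::euclidean_space mlist \<Rightarrow> 'a \<Rightarrow> bool" where
  "Hyp L E \<longleftrightarrow> rF L E \<noteq> 0 \<and> (\<forall>x \<zeta>. cF L (\<lambda>k. \<zeta> * emb E k - emb x k) = 0 \<longrightarrow> Im \<zeta> = 0)"

definition posc :: "'a::euclidean_space mlist \<Rightarrow> 'a \<Rightarrow> 'a \<Rightarrow> bool" where
  "posc L E u \<longleftrightarrow> (\<forall>\<zeta>. cF L (\<lambda>k. \<zeta> * emb E k - emb u k) = 0 \<longrightarrow> Im \<zeta> = 0 \<and> Re \<zeta> > 0)"

definition nnc :: "'a::euclidean_space mlist \<Rightarrow> 'a \<Rightarrow> 'a \<Rightarrow> bool" where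
  "nnc L E u \<longleftrightarrow> (\<forall>\<zeta>. cF L (\<lambda>k. \<zeta> * emb E k - emb u k) = 0 \<longrightarrow> Im \<zeta> = 0 \<and> Re \<zeta> \<ge> 0)"

lemma cF_smul_emb: "valid L d \<Longrightarrow> cF L (\<lambda>k. a * emb x k) = a ^ d * of_real (rF L x)"
  using cF_hom[of L d a "emb x"] by (simp add: cF_emb)

lemma pos_nz:
  assumes V: "valid L d" and p: "posc L E u"
  shows "rF L u \<noteq> 0"
proof
  assume "rF L u = 0"
  have "cF L (\<lambda>k. 0 * emb E k - emb u k) = cF L (\<lambda>k. (-1) * emb u k)" by simp
  also have "\<dots> = 0" using cF_smul_emb[OF V, of "-1" u] \<open>rF L u = 0\<close> by simp
  finally show False using p[unfolded posc_def, THEN spec, of 0] by simp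
qed

lemma real_cpx: "Im \<zeta> = 0 \<Longrightarrow> \<zeta> = of_real (Re \<zeta>)"
  by (simp add: complex_eq_iff)

lemma GL:
  assumes V: "valid L d" and H: "Hyp L E" and p: "posc L E u" and s: "s > 0" and t: "Im t \<ge> 0"
  shows "cF L (\<lambda>k. emb y k + t * emb u k + \<i> * of_real s * emb E k) \<noteq> 0"
proof (cases "d = 0")
  case True
  then show ?thesis using H V valid0_cF[of L _ "emb E"] by (simp add: Hyp_def cF_emb)
next
  case False
  then have d: "d \<ge> 1" by simp
  define A where "A = (\<lambda>\<theta>::real. \<lambda>k. of_real \<theta> * of_real ((y \<bullet> k) / s) + \<i> * emb E k)"
  have U: "cF L (emb u) \<noteq> 0" using pos_nz[OF V p] by (simp add: cF_emb)
  have contA: "continuous_on {0..1} (\<lambda>\<theta>. A \<theta> k)" for k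
    unfolding A_def by (intro continuous_intros)
  have key: "cF L (\<lambda>k. A 1 k + (t / of_real s) * emb u k) \<noteq> 0"
  proof (rule HC[OF V d U contA])
    show "(1::real) \<in> {0..1}" by simp
    show "Im (t / of_real s) \<ge> 0" using t s by simp
  next
    fix \<theta> :: real and \<zeta> :: complex assume "\<theta> \<in> {0..1}" "Im \<zeta> = 0"
    define x where "x = - ((\<theta> / s) *\<^sub>R y + Re \<zeta> *\<^sub>R u)"
    have "cF L (\<lambda>k. A \<theta> k + \<zeta> * emb u k) = cF L (\<lambda>k. \<i> * emb E k - emb x k)"
      by (rule cF_cong) (subst real_cpx[OF \<open>Im \<zeta> = 0\<close>],
          simp add: A_def x_def emb_def inner_add_left algebra_simps)
    then show "cF L (\<lambda>k. A \<theta> k + \<zeta> * emb u k) \<noteq> 0" using H unfolding Hyp_def by force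
  next
    fix \<zeta> :: complex assume z: "Im \<zeta> \<ge> 0"
    show "cF L (\<lambda>k. A 0 k + \<zeta> * emb u k) \<noteq> 0"
    proof (cases "\<zeta> = 0")
      case True
      have "cF L (\<lambda>k. A 0 k + \<zeta> * emb u k) = cF L (\<lambda>k. \<i> * emb E k)"
        by (rule cF_cong) (simp add: A_def True)
      then show ?thesis using H cF_smul_emb[OF V] by (simp add: Hyp_def)
    next
      case False
      have "cF L (\<lambda>k. A 0 k + \<zeta> * emb u k) = cF L (\<lambda>k. (- \<zeta>) * ((- \<i> / \<zeta>) * emb E k - emb u k))"
        by (rule cF_cong) (simp add: A_def False algebra_simps)
      also have "\<dots> = (- \<zeta>) ^ d * cF L (\<lambda>k. (- \<i> / \<zeta>) * emb E k - emb u k)"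
        by (rule cF_hom[OF V])
      finally have eq: "cF L (\<lambda>k. A 0 k + \<zeta> * emb u k) = (- \<zeta>) ^ d * cF L (\<lambda>k. (- \<i> / \<zeta>) * emb E k - emb u k)" .
      have "Re (- \<i> / \<zeta>) \<le> 0" using z by (simp add: Re_divide divide_nonpos_nonneg)
      then have "cF L (\<lambda>k. (- \<i> / \<zeta>) * emb E k - emb u k) \<noteq> 0"
        using p[unfolded posc_def, THEN spec, of "- \<i> / \<zeta>"] by auto
      then show ?thesis using eq False by simp
    qed
  qed
  have "cF L (\<lambda>k. emb y k + t * emb u k + \<i> * of_real s * emb E k)
      = cF L (\<lambda>k. of_real s * (A 1 k + (t / of_real s) * emb u k))"
    by (rule cF_cong) (use s in \<open>simp add: A_def emb_def algebra_simps\<close>)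
  also have "\<dots> = of_real s ^ d * cF L (\<lambda>k. A 1 k + (t / of_real s) * emb u k)"
    by (rule cF_hom[OF V])
  finally show ?thesis using key s by simp
qed


lemma Gb_pos:
  assumes V: "valid L d" and H: "Hyp L E" and p: "posc L E u" and t: "Im t > 0"
  shows "cF L (\<lambda>k. emb y k + t * emb u k) \<noteq> 0"
proof (cases "d = 0")
  case True
  then show ?thesis using H V valid0_cF[of L _ "emb E"] by (simp add: Hyp_def cF_emb)
next
  case False
  then have d: "d \<ge> 1" by simp
  define A where "A = (\<lambda>s::real. \<lambda>k. emb y k + \<i> * of_real s * emb E k)"
  have U: "cF L (emb u) \<noteq> 0" using pos_nz[OF V p] by (simp add: cF_emb)
  have contA: "continuous_on {0..1} (\<lambda>\<theta>. A \<theta> k)" for k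
    unfolding A_def by (intro continuous_intros)
  define \<theta>n where "\<theta>n = (\<lambda>n. inverse (real (Suc (Suc n))))"
  have thn: "\<theta>n n \<in> {0..1}" "\<theta>n n > 0" for n by (auto simp: \<theta>n_def field_simps)
  have lim: "\<theta>n \<longlonglongrightarrow> 0" unfolding \<theta>n_def by (rule LIMSEQ_Suc[OF LIMSEQ_inverse_real_of_nat])
  have "cF L (\<lambda>k. A 0 k + t * emb u k) \<noteq> 0"
  proof (rule hurwitz_step[OF V d U contA thn(1) lim])
    show "(0::real) \<in> {0..1}" by simp
    show "Im t > 0" by fact
    fix n and \<zeta> :: complex assume z: "Im \<zeta> > 0"
    have "cF L (\<lambda>k. A (\<theta>n n) k + \<zeta> * emb u k) = cF L (\<lambda>k. emb y k + \<zeta> * emb u k + \<i> * of_real (\<theta>n n) * emb E k)"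
      by (rule cF_cong) (simp add: A_def algebra_simps)
    also have "\<dots> \<noteq> 0" using GL[OF V H p thn(2)[of n]] z by simp
    finally show "cF L (\<lambda>k. A (\<theta>n n) k + \<zeta> * emb u k) \<noteq> 0" .
  qed
  then show ?thesis by (simp add: A_def)
qed

lemma cnj_emb[simp]: "cnj (emb x k) = emb x k"
  by (simp add: emb_def)

lemma Gb:
  assumes V: "valid L d" and H: "Hyp L E" and p: "posc L E u" and t: "Im t \<noteq> 0"
  shows "cF L (\<lambda>k. emb y k + t * emb u k) \<noteq> 0"
proof (cases "Im t > 0")
  case True then show ?thesis using Gb_pos[OF V H p] by blast
next
  case False
  then have "Im (cnj t) > 0" using t by simp
  then have "cF L (\<lambda>k. emb y k + cnj t * emb u k) \<noteq> 0" using Gb_pos[OF V H p] by blast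
  moreover have "cF L (\<lambda>k. emb y k + t * emb u k) = cnj (cF L (\<lambda>k. emb y k + cnj t * emb u k))"
    using cF_cnj[of L "\<lambda>k. emb y k + cnj t * emb u k"] by simp
  ultimately show ?thesis by simp
qed

lemma star:
  assumes V: "valid L d" and H: "Hyp L E" and p: "posc L E z" and th: "\<theta> \<in> {0..1}"
  shows "posc L E ((1 - \<theta>) *\<^sub>R E + \<theta> *\<^sub>R z)"
  unfolding posc_def
proof (intro allI impI)
  fix \<zeta> assume r: "cF L (\<lambda>k. \<zeta> * emb E k - emb ((1 - \<theta>) *\<^sub>R E + \<theta> *\<^sub>R z) k) = 0"
  show "Im \<zeta> = 0 \<and> Re \<zeta> > 0"
  proof (cases "\<theta> = 0")
    case True
    have "cF L (\<lambda>k. \<zeta> * emb E k - emb ((1 - \<theta>) *\<^sub>R E + \<theta> *\<^sub>R z) k) = cF L (\<lambda>k. (\<zeta> - 1) * emb E k)"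
      by (rule cF_cong) (simp add: True algebra_simps)
    also have "\<dots> = (\<zeta> - 1) ^ d * of_real (rF L E)" by (rule cF_smul_emb[OF V])
    finally have "(\<zeta> - 1) ^ d = 0" using r H by (simp add: Hyp_def)
    then have "\<zeta> = 1" by simp
    then show ?thesis by simp
  next
    case False
    then have t0: "\<theta> > 0" using th by auto
    have "cF L (\<lambda>k. \<zeta> * emb E k - emb ((1 - \<theta>) *\<^sub>R E + \<theta> *\<^sub>R z) k) =
          cF L (\<lambda>k. of_real \<theta> * (((\<zeta> - 1 + of_real \<theta>) / of_real \<theta>) * emb E k - emb z k))"
      by (rule cF_cong) (use t0 in \<open>simp add: emb_def inner_add_left inner_diff_left field_simps\<close>)
    also have "\<dots> = of_real \<theta> ^ d * cF L (\<lambda>k. ((\<zeta> - 1 + of_real \<theta>) / of_real \<theta>) * emb E k - emb z k)"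
      by (rule cF_hom[OF V])
    finally have "cF L (\<lambda>k. ((\<zeta> - 1 + of_real \<theta>) / of_real \<theta>) * emb E k - emb z k) = 0"
      using r t0 by simp
    then have "Im ((\<zeta> - 1 + of_real \<theta>) / of_real \<theta>) = 0 \<and> Re ((\<zeta> - 1 + of_real \<theta>) / of_real \<theta>) > 0"
      using p unfolding posc_def by blast
    then have "Im \<zeta> = 0" "Re \<zeta> - 1 + \<theta> > 0" using t0 by (simp_all add: zero_less_divide_iff)
    then show ?thesis using th by auto
  qed
qed

lemma Au:
  assumes V: "valid L d" and H: "Hyp L E" and pu: "posc L E u" and pz: "posc L E z" and b: "Re b \<ge> 0"
  shows "cF L (\<lambda>k. emb z k + b * emb u k) \<noteq> 0"
proof (cases "d = 0")
  case True
  then show ?thesis using H V valid0_cF[of L _ "emb E"] by (simp add: Hyp_def cF_emb)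
next
  case False
  then have d: "d \<ge> 1" by simp
  define A where "A = (\<lambda>\<theta>::real. emb ((1 - \<theta>) *\<^sub>R E + \<theta> *\<^sub>R z))"
  define U where "U = (\<lambda>k. - \<i> * emb u k)"
  have U: "cF L U \<noteq> 0" using pos_nz[OF V pu] cF_smul_emb[OF V, of "- \<i>" u] by (simp add: U_def)
  have contA: "continuous_on {0..1} (\<lambda>\<theta>. A \<theta> k)" for k
    unfolding A_def emb_def by (simp add: inner_add_left) (intro continuous_intros)
  have "cF L (\<lambda>k. A 1 k + (\<i> * b) * U k) \<noteq> 0"
  proof (rule HC[OF V d U contA])
    show "(1::real) \<in> {0..1}" by simp
    show "Im (\<i> * b) \<ge> 0" using b by simp
  next
    fix \<theta> :: real and \<zeta> :: complex assume th: "\<theta> \<in> {0..1}" and z: "Im \<zeta> = 0"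
    define zt where "zt = (1 - \<theta>) *\<^sub>R E + \<theta> *\<^sub>R z"
    have pzt: "posc L E zt" unfolding zt_def by (rule star[OF V H pz th])
    show "cF L (\<lambda>k. A \<theta> k + \<zeta> * U k) \<noteq> 0"
    proof (cases "Re \<zeta> = 0")
      case True
      then have "\<zeta> = 0" using z by (simp add: complex_eq_iff)
      then show ?thesis using pos_nz[OF V pzt] by (simp add: A_def zt_def[symmetric] cF_emb)
    next
      case False
      define r where "r = Re \<zeta>"
      have r0: "r \<noteq> 0" using False by (simp add: r_def)
      have Ath: "A \<theta> = emb zt" by (simp add: A_def zt_def)
      have one: "(- \<i> * of_real r) * (\<i> / of_real r) = 1" using r0 by (simp add: field_simps)
      have dist: "(c::complex) * (x + e * y) = c * x + (c * e) * y" for c x e y by (simp add: algebra_simps)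
      have "cF L (\<lambda>k. A \<theta> k + \<zeta> * U k) =
            cF L (\<lambda>k. (- \<i> * of_real r) * (emb u k + (\<i> / of_real r) * emb zt k))"
        unfolding dist one by (rule cF_cong) (simp add: Ath U_def r_def real_cpx[OF z, symmetric])
      also have "\<dots> = (- \<i> * of_real r) ^ d * cF L (\<lambda>k. emb u k + (\<i> / of_real r) * emb zt k)"
        by (rule cF_hom[OF V])
      finally show ?thesis
        using Gb[OF V H pzt, of "\<i> / of_real r" u] False by (simp add: r_def)
    qed
  next
    fix \<zeta> :: complex assume z: "Im \<zeta> \<ge> 0"
    define b' where "b' = - \<i> * \<zeta>"
    have rb: "Re b' \<ge> 0" using z by (simp add: b'_def)
    show "cF L (\<lambda>k. A 0 k + \<zeta> * U k) \<noteq> 0"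
    proof (cases "\<zeta> = 0")
      case True
      then show ?thesis using H by (simp add: A_def Hyp_def cF_emb)
    next
      case False
      then have b0: "b' \<noteq> 0" by (simp add: b'_def)
      have one: "(- b') * (- 1 / b') = 1" using b0 by simp
      have dist: "(c::complex) * (e * x - y) = (c * e) * x - c * y" for c x e y by (simp add: algebra_simps)
      have "cF L (\<lambda>k. A 0 k + \<zeta> * U k) = cF L (\<lambda>k. (- b') * ((- 1 / b') * emb E k - emb u k))"
        unfolding dist one by (rule cF_cong) (simp add: A_def U_def b'_def)
      also have "\<dots> = (- b') ^ d * cF L (\<lambda>k. (- 1 / b') * emb E k - emb u k)"
        by (rule cF_hom[OF V])
      finally have eq: "cF L (\<lambda>k. A 0 k + \<zeta> * U k) = (- b') ^ d * cF L (\<lambda>k. (- 1 / b') * emb E k - emb u k)" .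
      have "Re (- 1 / b') \<le> 0" using rb by (simp add: Re_divide divide_nonpos_nonneg)
      then have "cF L (\<lambda>k. (- 1 / b') * emb E k - emb u k) \<noteq> 0"
        using pu[unfolded posc_def, THEN spec, of "- 1 / b'"] by auto
      then show ?thesis using eq b0 by simp
    qed
  qed
  moreover have "cF L (\<lambda>k. A 1 k + (\<i> * b) * U k) = cF L (\<lambda>k. emb z k + b * emb u k)"
    by (rule cF_cong) (simp add: A_def U_def algebra_simps)
  ultimately show ?thesis by simp
qed

lemma shift_pos:
  assumes nn: "nnc L E w" and \<delta>: "\<delta> > 0"
  shows "posc L E (w + \<delta> *\<^sub>R E)"
  unfolding posc_def
proof (intro allI impI)
  fix \<zeta> assume r: "cF L (\<lambda>k. \<zeta> * emb E k - emb (w + \<delta> *\<^sub>R E) k) = 0"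
  have "cF L (\<lambda>k. \<zeta> * emb E k - emb (w + \<delta> *\<^sub>R E) k) = cF L (\<lambda>k. (\<zeta> - of_real \<delta>) * emb E k - emb w k)"
    by (rule cF_cong) (simp add: emb_def inner_add_left algebra_simps)
  then have "Im (\<zeta> - of_real \<delta>) = 0 \<and> Re (\<zeta> - of_real \<delta>) \<ge> 0"
    using r nn[unfolded nnc_def, THEN spec, of "\<zeta> - of_real \<delta>"] by simp
  then show "Im \<zeta> = 0 \<and> Re \<zeta> > 0" using \<delta> by simp
qed

lemma N1:
  assumes V: "valid L d" and H: "Hyp L E" and nn: "nnc L E w" and a: "Im a > 0" and b: "Im b \<ge> 0"
  shows "cF L (\<lambda>k. emb y k + a * emb E k + b * emb w k) \<noteq> 0"
proof (cases "Im b = 0")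
  case True
  define x where "x = - (y + Re b *\<^sub>R w)"
  have "cF L (\<lambda>k. emb y k + a * emb E k + b * emb w k) = cF L (\<lambda>k. a * emb E k - emb x k)"
    by (rule cF_cong) (subst real_cpx[OF True], simp add: x_def emb_def inner_add_left algebra_simps)
  then show ?thesis using H a unfolding Hyp_def by force
next
  case False
  define \<alpha> where "\<alpha> = Im a"
  define \<beta> where "\<beta> = Im b"
  have ab: "\<alpha> > 0" "\<beta> > 0" using a b False by (auto simp: \<alpha>_def \<beta>_def)
  define \<delta> where "\<delta> = \<alpha> / (2 * \<beta>)"
  have \<delta>: "\<delta> > 0" "\<beta> * \<delta> = \<alpha> / 2" using ab by (auto simp: \<delta>_def)
  define u where "u = w + \<delta> *\<^sub>R E"
  have pu: "posc L E u" unfolding u_def by (rule shift_pos[OF nn \<delta>(1)])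
  define y' where "y' = y + Re a *\<^sub>R E + Re b *\<^sub>R w"
  have "cF L (\<lambda>k. emb y k + a * emb E k + b * emb w k) =
        cF L (\<lambda>k. emb y' k + (\<i> * of_real \<beta>) * emb u k + \<i> * of_real (\<alpha> / 2) * emb E k)"
  proof (rule cF_cong)
    fix k :: 'a
    have h: "\<beta> * \<delta> * (E \<bullet> k) = \<alpha> / 2 * (E \<bullet> k)" using \<delta>(2) by simp
    have "\<beta> * (w \<bullet> k + \<delta> * (E \<bullet> k)) + \<alpha> / 2 * (E \<bullet> k) = \<beta> * (w \<bullet> k) + (\<beta> * \<delta> * (E \<bullet> k) + \<alpha> / 2 * (E \<bullet> k))"
      by (simp add: algebra_simps)
    also have "\<dots> = \<beta> * (w \<bullet> k) + \<alpha> * (E \<bullet> k)" unfolding h by (simp add: field_simps)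
    finally have "Im a * (E \<bullet> k) + Im b * (w \<bullet> k) = \<beta> * (w \<bullet> k + \<delta> * (E \<bullet> k)) + \<alpha> / 2 * (E \<bullet> k)"
      by (simp add: \<alpha>_def \<beta>_def)
    then show "emb y k + a * emb E k + b * emb w k =
        emb y' k + (\<i> * of_real \<beta>) * emb u k + \<i> * of_real (\<alpha> / 2) * emb E k"
      by (simp add: complex_eq_iff y'_def u_def emb_def inner_add_left)
  qed
  also have "\<dots> \<noteq> 0" using GL[OF V H pu, of "\<alpha> / 2" "\<i> * of_real \<beta>" y'] ab by simp
  finally show ?thesis .
qed

lemma realroot_i_pos:
  assumes V: "valid L d" and H: "Hyp L E" and nn: "nnc L E w" and z: "Im \<zeta> > 0"
  shows "cF L (\<lambda>k. \<zeta> * emb E k - emb x k) + of_real c * cF (dl L w) (\<lambda>k. \<zeta> * emb E k - emb x k) \<noteq> 0"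
proof -
  define f where "f = cpoly L (\<lambda>k. \<zeta> * emb E k - emb x k) (emb w)"
  have "\<forall>b. Im b \<ge> 0 \<longrightarrow> poly f b \<noteq> 0"
  proof (intro allI impI)
    fix b :: complex assume b: "Im b \<ge> 0"
    have "poly f b = cF L (\<lambda>k. emb (- x) k + \<zeta> * emb E k + b * emb w k)"
      unfolding f_def poly_cpoly by (rule cF_cong) (simp add: emb_def)
    then show "poly f b \<noteq> 0" using N1[OF V H nn z b] by simp
  qed
  from PL1[OF this, of c] show ?thesis
    by (simp add: f_def poly_cpoly pderiv_cpoly)
qed

lemma realroot_i:
  assumes V: "valid L d" and H: "Hyp L E" and nn: "nnc L E w" and z: "Im \<zeta> \<noteq> 0"
  shows "cF L (\<lambda>k. \<zeta> * emb E k - emb x k) + of_real c * cF (dl L w) (\<lambda>k. \<zeta> * emb E k - emb x k) \<noteq> 0"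
proof (cases "Im \<zeta> > 0")
  case True then show ?thesis using realroot_i_pos[OF V H nn] by blast
next
  case False
  then have "Im (cnj \<zeta>) > 0" using z by simp
  from realroot_i_pos[OF V H nn this, of x c]
  have ne: "cF L (\<lambda>k. cnj \<zeta> * emb E k - emb x k) + of_real c * cF (dl L w) (\<lambda>k. cnj \<zeta> * emb E k - emb x k) \<noteq> 0" .
  have "cF L (\<lambda>k. \<zeta> * emb E k - emb x k) = cnj (cF L (\<lambda>k. cnj \<zeta> * emb E k - emb x k))"
    using cF_cnj[of L "\<lambda>k. cnj \<zeta> * emb E k - emb x k"] by simp
  moreover have "cF (dl L w) (\<lambda>k. \<zeta> * emb E k - emb x k) = cnj (cF (dl L w) (\<lambda>k. cnj \<zeta> * emb E k - emb x k))"
    using cF_cnj[of "dl L w" "\<lambda>k. cnj \<zeta> * emb E k - emb x k"] by simp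
  ultimately have eq: "cF L (\<lambda>k. \<zeta> * emb E k - emb x k) + of_real c * cF (dl L w) (\<lambda>k. \<zeta> * emb E k - emb x k)
     = cnj (cF L (\<lambda>k. cnj \<zeta> * emb E k - emb x k) + of_real c * cF (dl L w) (\<lambda>k. cnj \<zeta> * emb E k - emb x k))"
    by simp
  show ?thesis unfolding eq complex_cnj_zero_iff by (rule ne)
qed

lemma sum_lin3: "(\<Sum>b\<in>B. f b * ((w + \<delta> *\<^sub>R v) \<bullet> b * g b)) =
   (\<Sum>b\<in>B. w \<bullet> b * (f b * g b)) + \<delta> * (\<Sum>b\<in>B. v \<bullet> b * (f b * g b))"
  unfolding sum_distrib_left sum.distrib[symmetric]
  by (intro sum.cong refl) (simp add: inner_add_left algebra_simps)

lemma rF_dl_lin: "rF (dl L (w + \<delta> *\<^sub>R v)) x = rF (dl L w) x + \<delta> * rF (dl L v) x"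
proof (induction L)
  case (Cons a L)
  obtain c \<alpha> where a: "a = (c, \<alpha>)" by fastforce
  show ?case using Cons
    by (simp add: a rF_dl_Cons sum.distrib sum_distrib_left distrib_left mult_ac,
        subst sum.distrib[symmetric], intro sum.cong refl, simp add: inner_add_left algebra_simps)
qed simp


lemma N2:
  assumes V: "valid L d" and H: "Hyp L E" and pz: "posc L E z" and nn: "nnc L E w" and \<mu>: "\<mu> \<ge> 0"
  shows "rF L z + \<mu> * rF (dl L w) z \<noteq> 0"
proof -
  define F0 where "F0 = rF L z"
  have F0: "F0 \<noteq> 0" using pos_nz[OF V pz] by (simp add: F0_def)
  define r where "r = rF (dl L w) z / F0"
  define s where "s = rF (dl L E) z / F0"
  have rs: "r + \<delta> * s \<ge> 0" if \<delta>: "\<delta> > 0" for \<delta>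
  proof -
    define u where "u = w + \<delta> *\<^sub>R E"
    have pu: "posc L E u" unfolding u_def by (rule shift_pos[OF nn \<delta>])
    define f where "f = cpoly L (emb z) (emb u)"
    have "\<forall>b. Re b \<ge> 0 \<longrightarrow> poly f b \<noteq> 0" using Au[OF V H pu pz] by (simp add: f_def poly_cpoly)
    from PL2[OF this] have "Re (poly (pderiv f) 0 / poly f 0) \<ge> 0" .
    moreover have "poly f 0 = of_real F0"
      by (simp add: f_def poly_cpoly F0_def cF_emb[symmetric])
    moreover have "poly (pderiv f) 0 = of_real (rF (dl L u) z)"
      by (simp add: f_def pderiv_cpoly cF_emb[symmetric])
    ultimately have "rF (dl L u) z / F0 \<ge> 0"
      by (simp add: of_real_divide[symmetric] del: of_real_divide)
    then show ?thesis using rF_dl_lin[of L w \<delta> E z] by (simp add: u_def r_def s_def add_divide_distrib)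
  qed
  have "r \<ge> 0"
  proof (rule ccontr)
    assume "\<not> r \<ge> 0"
    then have r0: "r < 0" by simp
    define t where "t = \<bar>s\<bar> + 1"
    have t: "t > 0" by (simp add: t_def add_nonneg_pos)
    define \<delta> where "\<delta> = - r / (2 * t)"
    have \<delta>0: "\<delta> > 0" using r0 t unfolding \<delta>_def by (intro divide_pos_pos) auto
    have "\<delta> * s \<le> \<delta> * \<bar>s\<bar>" using \<delta>0 by (simp add: mult_left_mono)
    also have "\<dots> < \<delta> * t" using \<delta>0 by (simp add: t_def)
    also have "\<dots> = - r / 2" using t by (simp add: \<delta>_def)
    finally have "r + \<delta> * s < r / 2" by linarith
    then show False using rs[OF \<delta>0] r0 by linarith
  qed
  have "rF L z + \<mu> * rF (dl L w) z = F0 * (1 + \<mu> * r)" using F0 by (simp add: F0_def r_def field_simps)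
  moreover have "1 + \<mu> * r > 0" using \<mu> \<open>r \<ge> 0\<close> by (simp add: add_pos_nonneg)
  ultimately show ?thesis using F0 by simp
qed

lemma dl_mem:
  assumes "(c, \<alpha>) \<in> set (dl L w)"
  shows "\<exists>c0 \<alpha>0 b. (c0, \<alpha>0) \<in> set L \<and> b \<in> Basis \<and> c = c0 * real (\<alpha>0 b) * (w \<bullet> b) \<and> \<alpha> = \<alpha>0(b := \<alpha>0 b - 1)"
proof -
  have "(c, \<alpha>) \<in> (\<Union>p\<in>set L. set ((\<lambda>(c, \<alpha>). map (\<lambda>b. (c * real (\<alpha> b) * (w \<bullet> b), \<alpha>(b := \<alpha> b - 1))) blist) p))"
    using assms unfolding dl_def set_concat set_map by blast
  then obtain p where p: "p \<in> set L" and
    m: "(c, \<alpha>) \<in> set ((\<lambda>(c, \<alpha>). map (\<lambda>b. (c * real (\<alpha> b) * (w \<bullet> b), \<alpha>(b := \<alpha> b - 1))) blist) p)"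
    by blast
  obtain c0 \<alpha>0 where p0: "p = (c0, \<alpha>0)" by fastforce
  have "(c, \<alpha>) \<in> (\<lambda>b. (c0 * real (\<alpha>0 b) * (w \<bullet> b), \<alpha>0(b := \<alpha>0 b - 1))) ` set blist"
    using m unfolding p0 prod.case set_map .
  then obtain b where b: "b \<in> set blist" and e: "(c, \<alpha>) = (c0 * real (\<alpha>0 b) * (w \<bullet> b), \<alpha>0(b := \<alpha>0 b - 1))"
    by blast
  from e have "c = c0 * real (\<alpha>0 b) * (w \<bullet> b)" "\<alpha> = \<alpha>0(b := \<alpha>0 b - 1)" by (simp_all only: prod.inject)
  then show ?thesis using p p0 b blist by blast
qed

lemma sum_upd:
  fixes \<alpha> :: "'a::euclidean_space \<Rightarrow> nat"
  assumes "b \<in> Basis"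
  shows "(\<Sum>k\<in>Basis. (\<alpha>(b := n)) k) + \<alpha> b = (\<Sum>k\<in>Basis. \<alpha> k) + n"
proof -
  have "(\<Sum>k\<in>Basis. (\<alpha>(b := n)) k) = n + (\<Sum>k\<in>Basis - {b}. \<alpha> k)"
    using assms by (subst sum.remove[of _ b]) (auto intro!: sum.cong)
  moreover have "(\<Sum>k\<in>Basis. \<alpha> k) = \<alpha> b + (\<Sum>k\<in>Basis - {b}. \<alpha> k)"
    using assms by (subst sum.remove[of _ b]) auto
  ultimately show ?thesis by simp
qed

lemma valid_dl_pos:
  assumes V: "valid L d" and m: "(c, \<alpha>) \<in> set (dl L w)" and c: "c \<noteq> 0"
  shows "d \<ge> 1 \<and> (\<Sum>b\<in>Basis. \<alpha> b) = d - 1"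
proof -
  obtain c0 \<alpha>0 b where m0: "(c0, \<alpha>0) \<in> set L" and b: "b \<in> Basis"
    and ce: "c = c0 * real (\<alpha>0 b) * (w \<bullet> b)" and ae: "\<alpha> = \<alpha>0(b := \<alpha>0 b - 1)"
    using dl_mem[OF m] by blast
  have "c0 \<noteq> 0" "\<alpha>0 b \<noteq> 0" using c ce by auto
  then have s: "(\<Sum>k\<in>Basis. \<alpha>0 k) = d" using V m0 by (auto simp: valid_def)
  have "\<alpha>0 b \<le> (\<Sum>k\<in>Basis. \<alpha>0 k)" using b by (intro member_le_sum) auto
  moreover have "(\<Sum>k\<in>Basis. \<alpha> k) + \<alpha>0 b = (\<Sum>k\<in>Basis. \<alpha>0 k) + (\<alpha>0 b - 1)"
    unfolding ae by (rule sum_upd[OF b])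
  ultimately show ?thesis using s \<open>\<alpha>0 b \<noteq> 0\<close> by auto
qed

lemma valid_dl: "valid L d \<Longrightarrow> valid (dl L w) (d - 1)"
  unfolding valid_def[of "dl L w"]
proof (intro ballI)
  fix p assume V: "valid L d" and p: "p \<in> set (dl L w)"
  obtain c \<alpha> where p0: "p = (c, \<alpha>)" by fastforce
  show "case p of (c, \<alpha>) \<Rightarrow> c \<noteq> 0 \<longrightarrow> sum \<alpha> Basis = d - 1"
    using valid_dl_pos[OF V p[unfolded p0]] by (simp add: p0)
qed

lemma rF_zero: "(\<forall>(c,\<alpha>)\<in>set M. c = 0) \<Longrightarrow> rF M x = 0"
  by (induction M) auto

lemma dl_zero:
  assumes V: "valid L 0" shows "rF (dl L w) x = 0"
proof (rule rF_zero, intro ballI)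
  fix p assume p: "p \<in> set (dl L w)"
  obtain c \<alpha> where p0: "p = (c, \<alpha>)" by fastforce
  show "case p of (c, \<alpha>) \<Rightarrow> c = 0"
    using valid_dl_pos[OF V p[unfolded p0]] by (auto simp: p0)
qed

lemma mon_Suc: "b \<in> Basis \<Longrightarrow> mon (\<alpha>(b := Suc (\<alpha> b))) X = X b * mon \<alpha> X"
  using mon_upd[of b \<alpha> "Suc (\<alpha> b)" X] mon_upd[of b \<alpha> "\<alpha> b" X] by simp

lemma rF_map_step: "bl \<in> Basis \<Longrightarrow>
   rF (map (\<lambda>(c,\<alpha>). (- c, \<alpha>(bl := Suc (\<alpha> bl)))) M) x = - (x \<bullet> bl) * rF M x"
proof (induction M)
  case (Cons a M)
  obtain c \<alpha> where a: "a = (c, \<alpha>)" by fastforce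
  show ?case using Cons(1)[OF Cons(2)]
    by (simp only: a list.map prod.case rF_Cons mon_Suc[OF Cons(2)]) (simp add: algebra_simps)
qed simp

lemma cF_map_step: "bl \<in> Basis \<Longrightarrow>
   cF (map (\<lambda>(c,\<alpha>). (- c, \<alpha>(bl := Suc (\<alpha> bl)))) M) g = - g bl * cF M g"
proof (induction M)
  case (Cons a M)
  obtain c \<alpha> where a: "a = (c, \<alpha>)" by fastforce
  show ?case using Cons(1)[OF Cons(2)]
    by (simp only: a list.map prod.case cF_Cons mon_Suc[OF Cons(2)]) (simp add: algebra_simps)
qed simp

lemma rF_stepL: "bl \<in> Basis \<Longrightarrow> rF (stepL L w bl) x = rF L x - (x \<bullet> bl) * rF (dl L w) x"
  by (simp add: stepL_def rF_map_step)

lemma cF_stepL: "bl \<in> Basis \<Longrightarrow> cF (stepL L w bl) g = cF L g - g bl * cF (dl L w) g"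
  by (simp add: stepL_def cF_map_step)

lemma valid_stepL:
  assumes V: "valid L d" and bl: "bl \<in> Basis"
  shows "valid (stepL L w bl) d"
  unfolding valid_def
proof (intro ballI)
  fix p assume "p \<in> set (stepL L w bl)"
  then consider "p \<in> set L" | c \<alpha> where "(c, \<alpha>) \<in> set (dl L w)" "p = (- c, \<alpha>(bl := Suc (\<alpha> bl)))"
    by (auto simp: stepL_def)
  then show "case p of (c, \<alpha>) \<Rightarrow> c \<noteq> 0 \<longrightarrow> sum \<alpha> Basis = d"
  proof cases
    case 1 then show ?thesis using V by (auto simp: valid_def)
  next
    case 2
    show ?thesis
    proof (cases "c = 0")
      case False
      then have "d \<ge> 1" "(\<Sum>b\<in>Basis. \<alpha> b) = d - 1" using valid_dl_pos[OF V 2(1)] by auto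
      moreover have "(\<Sum>k\<in>Basis. (\<alpha>(bl := Suc (\<alpha> bl))) k) + \<alpha> bl = (\<Sum>k\<in>Basis. \<alpha> k) + Suc (\<alpha> bl)"
        by (rule sum_upd[OF bl])
      ultimately show ?thesis using 2(2) by auto
    qed (use 2 in simp)
  qed
qed

lemma step_ii:
  assumes V: "valid L d" and H: "Hyp L E" and pz: "posc L E z" and nn: "nnc L E w" and c: "c \<le> 0"
    and eq: "rF L (t *\<^sub>R E - z) + c * rF (dl L w) (t *\<^sub>R E - z) = 0"
  shows "t > 0"
proof (rule ccontr)
  assume "\<not> t > 0"
  then have t: "t \<le> 0" by simp
  define x' where "x' = z - t *\<^sub>R E"
  have px: "posc L E x'" unfolding posc_def
  proof (intro allI impI)
    fix \<zeta> assume r: "cF L (\<lambda>k. \<zeta> * emb E k - emb x' k) = 0"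
    have "cF L (\<lambda>k. \<zeta> * emb E k - emb x' k) = cF L (\<lambda>k. (\<zeta> + of_real t) * emb E k - emb z k)"
      by (rule cF_cong) (simp add: x'_def emb_def inner_diff_left algebra_simps)
    then have "Im (\<zeta> + of_real t) = 0 \<and> Re (\<zeta> + of_real t) > 0"
      using r pz[unfolded posc_def, THEN spec, of "\<zeta> + of_real t"] by simp
    then show "Im \<zeta> = 0 \<and> Re \<zeta> > 0" using t by simp
  qed
  have neg: "t *\<^sub>R E - z = (-1) *\<^sub>R x'" by (simp add: x'_def)
  show False
  proof (cases "d = 0")
    case True
    then have "rF L (t *\<^sub>R E - z) = rF L E" using V valid0_rF by blast
    moreover have "rF (dl L w) (t *\<^sub>R E - z) = 0" using True V dl_zero by blast
    ultimately show False using eq H by (simp add: Hyp_def)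
  next
    case False
    then obtain m where m: "d = Suc m" by (cases d) auto
    have "rF L (t *\<^sub>R E - z) = (-1) ^ d * rF L x'" unfolding neg by (rule rF_hom[OF V])
    moreover have "rF (dl L w) (t *\<^sub>R E - z) = (-1) ^ (d - 1) * rF (dl L w) x'"
      unfolding neg by (rule rF_hom[OF valid_dl[OF V]])
    ultimately have "(-1) ^ m * (c * rF (dl L w) x' - rF L x') = 0"
      using eq by (simp add: m algebra_simps)
    then have "rF L x' + (- c) * rF (dl L w) x' = 0" by simp
    moreover have "- c \<ge> 0" using c by simp
    ultimately show False using N2[OF V H px nn] by blast
  qed
qed


lemma rF_map_mon: "rF (map (\<lambda>\<alpha>. (C \<alpha>, \<alpha>)) xs) x = (\<Sum>\<alpha>\<leftarrow>xs. C \<alpha> * mon \<alpha> (\<lambda>b. x \<bullet> b))"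
  by (induction xs) auto

lemma homog_to_list:
  assumes "homog_poly_fun d (f :: 'a::euclidean_space \<Rightarrow> real)"
  shows "\<exists>L. valid L d \<and> f = rF L"
proof -
  obtain c :: "('a \<Rightarrow> nat) \<Rightarrow> real" where fin: "finite {\<alpha>. c \<alpha> \<noteq> 0}"
    and v: "\<forall>\<alpha>. c \<alpha> \<noteq> 0 \<longrightarrow> (\<forall>b. b \<notin> Basis \<longrightarrow> \<alpha> b = 0) \<and> (\<Sum>b\<in>Basis. \<alpha> b) = d"
    and f: "\<forall>x. f x = (\<Sum>\<alpha>\<in>{\<alpha>. c \<alpha> \<noteq> 0}. c \<alpha> * (\<Prod>b\<in>Basis. (x \<bullet> b) ^ \<alpha> b))"
    using assms unfolding homog_poly_fun_def by blast
  obtain xs where xs: "distinct xs" "set xs = {\<alpha>. c \<alpha> \<noteq> 0}" using finite_distinct_list[OF fin] by blast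
  define L where "L = map (\<lambda>\<alpha>. (c \<alpha>, \<alpha>)) xs"
  have "valid L d" using v xs by (auto simp: L_def valid_def)
  moreover have "f = rF L"
  proof
    fix x
    have "rF L x = (\<Sum>\<alpha>\<leftarrow>xs. c \<alpha> * mon \<alpha> (\<lambda>b. x \<bullet> b))" by (simp add: L_def rF_map_mon)
    also have "\<dots> = (\<Sum>\<alpha>\<in>{\<alpha>. c \<alpha> \<noteq> 0}. c \<alpha> * mon \<alpha> (\<lambda>b. x \<bullet> b))"
      using xs by (simp add: sum_list_distinct_conv_sum_set)
    finally show "f x = rF L x" using f by (simp add: mon_def)
  qed
  ultimately show ?thesis by blast
qed

definition nrm :: "('a::euclidean_space \<Rightarrow> nat) \<Rightarrow> 'a \<Rightarrow> nat" where
  "nrm \<alpha> = (\<lambda>b. if b \<in> Basis then \<alpha> b else 0)"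

lemma mon_nrm: "mon (nrm \<alpha>) X = mon \<alpha> X"
  unfolding mon_def nrm_def by (intro prod.cong) auto

lemma sum_nrm: "(\<Sum>b\<in>Basis. nrm \<alpha> b) = (\<Sum>b\<in>Basis. \<alpha> b)"
  unfolding nrm_def by (intro sum.cong) auto

definition coefL :: "'a::euclidean_space mlist \<Rightarrow> ('a \<Rightarrow> nat) \<Rightarrow> real" where
  "coefL L \<beta> = (\<Sum>(c,\<alpha>)\<leftarrow>L. if nrm \<alpha> = \<beta> then c else 0)"

lemma coefL_Cons: "coefL ((c,\<alpha>)#L) \<beta> = (if nrm \<alpha> = \<beta> then c else 0) + coefL L \<beta>"
  by (simp add: coefL_def)

lemma coefL_nz: "coefL L \<beta> \<noteq> 0 \<Longrightarrow> \<exists>(c,\<alpha>)\<in>set L. c \<noteq> 0 \<and> nrm \<alpha> = \<beta>"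
proof (induction L)
  case Nil then show ?case by (simp add: coefL_def)
next
  case (Cons a L)
  obtain c \<alpha> where a: "a = (c, \<alpha>)" by fastforce
  show ?case using Cons by (cases "nrm \<alpha> = \<beta> \<and> c \<noteq> 0") (auto simp: a coefL_Cons split: if_splits)
qed

lemma group_sum:
  assumes "finite K" "\<forall>(c,\<alpha>)\<in>set L. nrm \<alpha> \<in> K"
  shows "rF L x = (\<Sum>\<beta>\<in>K. coefL L \<beta> * mon \<beta> (\<lambda>b. x \<bullet> b))"
  using assms(2)
proof (induction L)
  case Nil then show ?case by (simp add: coefL_def)
next
  case (Cons a L)
  obtain c \<alpha> where a: "a = (c, \<alpha>)" by fastforce
  have inK: "nrm \<alpha> \<in> K" using Cons.prems by (auto simp: a)
  have "(\<Sum>\<beta>\<in>K. coefL (a # L) \<beta> * mon \<beta> (\<lambda>b. x \<bullet> b))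
      = (\<Sum>\<beta>\<in>K. (if nrm \<alpha> = \<beta> then c * mon \<beta> (\<lambda>b. x \<bullet> b) else 0)) + (\<Sum>\<beta>\<in>K. coefL L \<beta> * mon \<beta> (\<lambda>b. x \<bullet> b))"
    unfolding sum.distrib[symmetric] by (intro sum.cong refl) (simp add: a coefL_Cons distrib_right)
  also have "(\<Sum>\<beta>\<in>K. (if nrm \<alpha> = \<beta> then c * mon \<beta> (\<lambda>b. x \<bullet> b) else 0)) = c * mon \<alpha> (\<lambda>b. x \<bullet> b)"
    using assms(1) inK by (simp add: sum.delta mon_nrm)
  finally show ?case using Cons by (simp add: a)
qed

lemma list_to_homog:
  assumes V: "valid L d"
  shows "homog_poly_fun d (rF L)"
proof -
  define K where "K = nrm ` snd ` set L"
  have fK: "finite K" by (simp add: K_def)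
  have supp: "{\<beta>. coefL L \<beta> \<noteq> 0} \<subseteq> K"
    using coefL_nz by (force simp: K_def)
  have fs: "finite {\<beta>. coefL L \<beta> \<noteq> 0}" using finite_subset[OF supp fK] .
  have vs: "(\<forall>b. b \<notin> Basis \<longrightarrow> \<beta> b = 0) \<and> (\<Sum>b\<in>Basis. \<beta> b) = d" if "coefL L \<beta> \<noteq> 0" for \<beta>
  proof -
    from coefL_nz[OF that] obtain p where p: "p \<in> set L" "case p of (c, \<alpha>) \<Rightarrow> c \<noteq> 0 \<and> nrm \<alpha> = \<beta>"
      by blast
    obtain c \<alpha> where p0: "p = (c, \<alpha>)" by fastforce
    have m: "(c, \<alpha>) \<in> set L" "c \<noteq> 0" "nrm \<alpha> = \<beta>" using p by (auto simp: p0)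
    have "(\<Sum>b\<in>Basis. \<alpha> b) = d" using V m by (auto simp: valid_def)
    then show ?thesis using m sum_nrm[of \<alpha>] by (auto simp: nrm_def)
  qed
  have eq: "rF L x = (\<Sum>\<beta>\<in>{\<beta>. coefL L \<beta> \<noteq> 0}. coefL L \<beta> * (\<Prod>b\<in>Basis. (x \<bullet> b) ^ \<beta> b))" for x
  proof -
    have "rF L x = (\<Sum>\<beta>\<in>K. coefL L \<beta> * mon \<beta> (\<lambda>b. x \<bullet> b))"
      by (rule group_sum[OF fK]) (force simp: K_def)
    also have "\<dots> = (\<Sum>\<beta>\<in>{\<beta>. coefL L \<beta> \<noteq> 0}. coefL L \<beta> * mon \<beta> (\<lambda>b. x \<bullet> b))"
      by (rule sum.mono_neutral_right[OF fK supp]) auto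
    finally show ?thesis by (simp add: mon_def)
  qed
  show ?thesis unfolding homog_poly_fun_def
    by (intro exI[of _ "coefL L"] conjI fs allI impI eq vs) (auto dest: vs)
qed

lemma cF_real_line: "cF L (\<lambda>k. of_real t * emb E k - emb x k) = of_real (rF L (t *\<^sub>R E - x))"
proof -
  have "cF L (\<lambda>k. of_real t * emb E k - emb x k) = cF L (emb (t *\<^sub>R E - x))"
    by (rule cF_cong) (simp add: emb_def inner_diff_left)
  then show ?thesis by (simp add: cF_emb)
qed

lemma hyperbolic_to_Hyp:
  assumes hyp: "hyperbolic (rF L) E"
  shows "Hyp L E"
  unfolding Hyp_def
proof (intro conjI allI impI)
  show "rF L E \<noteq> 0" using hyp by (simp add: hyperbolic_def)
  fix x \<zeta> assume r: "cF L (\<lambda>k. \<zeta> * emb E k - emb x k) = 0"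
  obtain p :: "real poly" where p: "\<forall>t. poly p t = rF L (t *\<^sub>R E - x)"
    and roots: "\<forall>z::complex. poly (map_poly complex_of_real p) z = 0 \<longrightarrow> z \<in> \<real>"
    using hyp unfolding hyperbolic_def by blast
  have "poly p t = rF L (- x + t *\<^sub>R E)" for t using p by (simp add: algebra_simps)
  then have "poly (map_poly of_real p) \<zeta> = cF L (\<lambda>b. emb (- x) b + \<zeta> * emb E b)"
    by (rule real_poly_complex)
  also have "\<dots> = cF L (\<lambda>k. \<zeta> * emb E k - emb x k)"
    by (rule cF_cong) (simp add: emb_def)
  finally have "\<zeta> \<in> \<real>" using roots r by simp
  then show "Im \<zeta> = 0" by (simp add: complex_is_Real_iff)
qed

lemma Hyp_to_hyperbolic:
  assumes V: "valid L d" and H: "Hyp L E"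
  shows "hyperbolic (rF L) E"
  unfolding hyperbolic_def
proof (intro conjI allI)
  show "\<exists>d. homog_poly_fun d (rF L)" using list_to_homog[OF V] by blast
  show "rF L E \<noteq> 0" using H by (simp add: Hyp_def)
  fix x
  define p where "p = rpoly L (- x) E"
  have pt: "poly p t = rF L (- x + t *\<^sub>R E)" for t by (simp add: p_def poly_rpoly)
  show "\<exists>p. (\<forall>t. poly p t = rF L (t *\<^sub>R E - x)) \<and>
            (\<forall>z. poly (map_poly complex_of_real p) z = 0 \<longrightarrow> z \<in> \<real>)"
  proof (intro exI[of _ p] conjI allI impI)
    show "poly p t = rF L (t *\<^sub>R E - x)" for t by (simp add: pt algebra_simps)
    fix z :: complex assume z: "poly (map_poly complex_of_real p) z = 0"
    have "poly (map_poly of_real p) z = cF L (\<lambda>b. emb (- x) b + z * emb E b)"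
      by (rule real_poly_complex[OF pt])
    also have "\<dots> = cF L (\<lambda>k. z * emb E k - emb x k)"
      by (rule cF_cong) (simp add: emb_def)
    finally have "Im z = 0" using H z by (simp add: Hyp_def)
    then show "z \<in> \<real>" by (simp add: complex_is_Real_iff)
  qed
qed


definition liftA :: "('a::euclidean_space \<Rightarrow> nat) \<Rightarrow> ('a \<times> 'b::euclidean_space) \<Rightarrow> nat" where
  "liftA \<alpha> = (\<lambda>p. if p \<in> (\<lambda>b. (b, 0)) ` Basis then \<alpha> (fst p) else 0)"

definition liftL :: "'a::euclidean_space mlist \<Rightarrow> ('a \<times> 'b::euclidean_space) mlist" where
  "liftL L = map (\<lambda>(c,\<alpha>). (c, liftA \<alpha>)) L"

lemma liftA_1: "b \<in> Basis \<Longrightarrow> liftA \<alpha> (b, 0) = \<alpha> b"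
  by (auto simp: liftA_def)

lemma liftA_2: "b \<in> Basis \<Longrightarrow> liftA \<alpha> ((0::'a::euclidean_space), b) = 0"
  by (auto simp: liftA_def)

lemma Basis_prod_split:
  "(Basis :: ('a::euclidean_space \<times> 'b::euclidean_space) set) = (\<lambda>b. (b, 0)) ` Basis \<union> (\<lambda>b. (0, b)) ` Basis"
  "(\<lambda>b. (b, 0)) ` (Basis :: 'a set) \<inter> (\<lambda>b. (0::'a, b)) ` (Basis :: 'b set) = {}"
  by (auto simp: Basis_prod_def)

lemma prod_Basis_prod:
  fixes f :: "'a::euclidean_space \<times> 'b::euclidean_space \<Rightarrow> 'c::comm_monoid_mult"
  shows "(\<Prod>p\<in>Basis. f p) = (\<Prod>b\<in>Basis. f (b, 0)) * (\<Prod>b\<in>Basis. f (0, b))"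
proof -
  have "(\<Prod>p\<in>Basis. f p) = (\<Prod>p\<in>(\<lambda>b. (b, 0)) ` Basis. f p) * (\<Prod>p\<in>(\<lambda>b. (0, b)) ` Basis. f p)"
    unfolding Basis_prod_split(1) by (rule prod.union_disjoint) (auto simp: Basis_prod_split(2))
  also have "\<dots> = (\<Prod>b\<in>Basis. f (b, 0)) * (\<Prod>b\<in>Basis. f (0, b))"
    by (subst prod.reindex, simp add: inj_on_def)+ (simp add: comp_def)
  finally show ?thesis .
qed

lemma sum_Basis_prod:
  fixes f :: "'a::euclidean_space \<times> 'b::euclidean_space \<Rightarrow> 'c::comm_monoid_add"
  shows "(\<Sum>p\<in>Basis. f p) = (\<Sum>b\<in>Basis. f (b, 0)) + (\<Sum>b\<in>Basis. f (0, b))"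
proof -
  have "(\<Sum>p\<in>Basis. f p) = (\<Sum>p\<in>(\<lambda>b. (b, 0)) ` Basis. f p) + (\<Sum>p\<in>(\<lambda>b. (0, b)) ` Basis. f p)"
    unfolding Basis_prod_split(1) by (rule sum.union_disjoint) (auto simp: Basis_prod_split(2))
  also have "\<dots> = (\<Sum>b\<in>Basis. f (b, 0)) + (\<Sum>b\<in>Basis. f (0, b))"
    by (subst sum.reindex, simp add: inj_on_def)+ (simp add: comp_def)
  finally show ?thesis .
qed

lemma mon_lift: "mon (liftA \<alpha>) (g :: 'a::euclidean_space \<times> 'b::euclidean_space \<Rightarrow> 'c::comm_ring_1)
    = mon \<alpha> (\<lambda>b. g (b, 0))"
  unfolding mon_def prod_Basis_prod
  by (simp add: liftA_1 liftA_2 cong: prod.cong)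

lemma sum_lift: "(\<Sum>p\<in>(Basis :: ('a::euclidean_space \<times> 'b::euclidean_space) set). liftA \<alpha> p) = (\<Sum>b\<in>Basis. \<alpha> b)"
  unfolding sum_Basis_prod by (simp add: liftA_1 liftA_2 cong: sum.cong)

lemma rF_lift: "rF (liftL L :: ('a::euclidean_space \<times> 'b::euclidean_space) mlist) z = rF L (fst z)"
proof (induction L)
  case (Cons a L)
  obtain c \<alpha> where a: "a = (c, \<alpha>)" by fastforce
  have "mon (liftA \<alpha>) (\<lambda>p. z \<bullet> p) = mon \<alpha> (\<lambda>b. fst z \<bullet> b)"
    by (cases z) (simp add: mon_lift inner_Pair)
  then show ?case using Cons by (simp add: a liftL_def)
qed (simp add: liftL_def)

lemma cF_lift: "cF (liftL L :: ('a::euclidean_space \<times> 'b::euclidean_space) mlist) g = cF L (\<lambda>b. g (b, 0))"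
  by (induction L) (auto simp: liftL_def mon_lift)

lemma valid_lift: "valid L d \<Longrightarrow> valid (liftL L :: ('a::euclidean_space \<times> 'b::euclidean_space) mlist) d"
  by (auto simp: valid_def liftL_def sum_lift)

lemma Hyp_lift:
  assumes "Hyp L e"
  shows "Hyp (liftL L :: ('a::euclidean_space \<times> 'b::euclidean_space) mlist) (e, 0)"
  unfolding Hyp_def
proof (intro conjI allI impI)
  show "rF (liftL L :: ('a \<times> 'b) mlist) (e, 0) \<noteq> 0" using assms by (simp add: rF_lift Hyp_def)
  fix x :: "'a \<times> 'b" and \<zeta>
  assume "cF (liftL L) (\<lambda>k. \<zeta> * emb (e, 0) k - emb x k) = 0"
  moreover have "cF (liftL L) (\<lambda>k. \<zeta> * emb (e, 0) k - emb x k) = cF L (\<lambda>b. \<zeta> * emb e b - emb (fst x) b)"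
    by (cases x) (simp add: cF_lift emb_def inner_Pair)
  ultimately show "Im \<zeta> = 0" using assms by (simp add: Hyp_def)
qed

lemma posc_lift:
  assumes H: "Hyp L e" and z: "z \<in> hcone_open (rF L) e"
  shows "posc (liftL L :: ('a::euclidean_space \<times> 'b::euclidean_space) mlist) (e, 0) (z, y)"
  unfolding posc_def
proof (intro allI impI)
  fix \<zeta> assume r: "cF (liftL L :: ('a \<times> 'b) mlist) (\<lambda>k. \<zeta> * emb (e, 0) k - emb (z, y) k) = 0"
  have "cF (liftL L :: ('a \<times> 'b) mlist) (\<lambda>k. \<zeta> * emb (e, 0) k - emb (z, y) k) = cF L (\<lambda>b. \<zeta> * emb e b - emb z b)"
    by (simp add: cF_lift emb_def inner_Pair)
  then have r': "cF L (\<lambda>b. \<zeta> * emb e b - emb z b) = 0" using r by simp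
  then have im: "Im \<zeta> = 0" using H by (simp add: Hyp_def)
  then have "cF L (\<lambda>b. of_real (Re \<zeta>) * emb e b - emb z b) = 0" using r' real_cpx[OF im] by simp
  then have "rF L (Re \<zeta> *\<^sub>R e - z) = 0" by (simp add: cF_real_line)
  then have "Re \<zeta> > 0" using z by (simp add: hcone_open_def eigenvalues_def)
  then show "Im \<zeta> = 0 \<and> Re \<zeta> > 0" using im by simp
qed


theorem theorem3p3:
  fixes h :: "real^'n \<Rightarrow> real" and e :: "real^'n" and vs :: "'m::finite \<Rightarrow> real^'n"
  assumes "hyperbolic h e"
    and "\<forall>j. vs j \<in> hcone_closed h e"
  shows "hyperbolic (hbracket h vs) (e, 0)
    \<and> hcone_open h e \<times> {y :: real^'m. \<forall>j. y $ j \<le> 0} \<subseteq> hcone_open (hbracket h vs) (e, 0)"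
proof -
  obtain d where "homog_poly_fun d h" using assms(1) by (auto simp: hyperbolic_def)
  then obtain L0 where V0: "valid L0 d" and hL0: "h = rF L0" using homog_to_list by blast
  have H0: "Hyp L0 e" using assms(1) hL0 hyperbolic_to_Hyp by blast
  define E :: "(real^'n) \<times> (real^'m)" where "E = (e, 0)"
  define bj :: "'m \<Rightarrow> (real^'n) \<times> (real^'m)" where "bj = (\<lambda>j. (0, axis j 1))"
  define wj :: "'m \<Rightarrow> (real^'n) \<times> (real^'m)" where "wj = (\<lambda>j. (vs j, 0))"
  have bjB: "bj j \<in> Basis" for j by (simp add: bj_def Basis_prod_def)
  have Ebj: "E \<bullet> bj j = 0" for j by (simp add: E_def bj_def inner_Pair)
  have zbj: "z \<bullet> bj j = snd z $ j" for z :: "(real^'n) \<times> (real^'m)" and j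
    by (cases z) (simp add: bj_def inner_Pair inner_axis)
  define F0 :: "(real^'n) \<times> (real^'m) \<Rightarrow> real" where "F0 = (\<lambda>z. h (fst z))"
  have claim: "\<exists>L. valid L d \<and> foldr (hop vs) l F0 = rF L \<and> Hyp L E \<and> (\<forall>x. rF L (x, 0) = h x)
      \<and> (\<forall>z y. z \<in> hcone_open h e \<longrightarrow> (\<forall>j. y $ j \<le> 0) \<longrightarrow> posc L E (z, y))" for l
  proof (induction l)
    case Nil
    show ?case
    proof (intro exI[of _ "liftL L0"] conjI allI impI)
      show "valid (liftL L0 :: ((real^'n) \<times> (real^'m)) mlist) d" by (rule valid_lift[OF V0])
      show "foldr (hop vs) [] F0 = rF (liftL L0)" by (auto simp: F0_def rF_lift hL0)
      show "Hyp (liftL L0) E" unfolding E_def by (rule Hyp_lift[OF H0])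
      show "rF (liftL L0 :: ((real^'n) \<times> (real^'m)) mlist) (x, 0) = h x" for x by (simp add: rF_lift hL0)
      fix z y assume "z \<in> hcone_open h e"
      then show "posc (liftL L0) E (z, y)" unfolding E_def using posc_lift[OF H0] hL0 by blast
    qed
  next
    case (Cons j l)
    then obtain L where V: "valid L d" and FL: "foldr (hop vs) l F0 = rF L" and H: "Hyp L E"
      and hx: "\<forall>x. rF L (x, 0) = h x"
      and pc: "\<forall>z y. z \<in> hcone_open h e \<longrightarrow> (\<forall>j. y $ j \<le> 0) \<longrightarrow> posc L E (z, y)" by blast
    define L' where "L' = stepL L (wj j) (bj j)"
    have rL': "rF L' x = rF L x - (x \<bullet> bj j) * rF (dl L (wj j)) x" for x
      unfolding L'_def by (rule rF_stepL[OF bjB])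
    have cL': "cF L' g = cF L g - g (bj j) * cF (dl L (wj j)) g" for g
      unfolding L'_def by (rule cF_stepL[OF bjB])
    have nn: "nnc L E (wj j)" unfolding nnc_def
    proof (intro allI impI)
      fix \<zeta> assume r: "cF L (\<lambda>k. \<zeta> * emb E k - emb (wj j) k) = 0"
      then have im: "Im \<zeta> = 0" using H unfolding Hyp_def by blast
      then have "cF L (\<lambda>k. of_real (Re \<zeta>) * emb E k - emb (wj j) k) = 0" using r real_cpx[OF im] by simp
      then have "rF L (Re \<zeta> *\<^sub>R E - wj j) = 0" by (simp add: cF_real_line)
      moreover have "Re \<zeta> *\<^sub>R E - wj j = (Re \<zeta> *\<^sub>R e - vs j, 0)" by (simp add: E_def wj_def)
      ultimately have "h (Re \<zeta> *\<^sub>R e - vs j) = 0" using hx by simp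
      then have "Re \<zeta> \<ge> 0" using assms(2) by (auto simp: hcone_closed_def eigenvalues_def)
      then show "Im \<zeta> = 0 \<and> Re \<zeta> \<ge> 0" using im by simp
    qed
    have HL': "Hyp L' E" unfolding Hyp_def
    proof (intro conjI allI impI)
      show "rF L' E \<noteq> 0" using H by (simp add: rL' Ebj Hyp_def)
      fix x \<zeta> assume r: "cF L' (\<lambda>k. \<zeta> * emb E k - emb x k) = 0"
      show "Im \<zeta> = 0"
      proof (rule ccontr)
        assume "Im \<zeta> \<noteq> 0"
        from realroot_i[OF V H nn this, of x "x \<bullet> bj j"]
        have "cF L (\<lambda>k. \<zeta> * emb E k - emb x k) + of_real (x \<bullet> bj j) * cF (dl L (wj j)) (\<lambda>k. \<zeta> * emb E k - emb x k) \<noteq> 0" .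
        moreover have "cF L' (\<lambda>k. \<zeta> * emb E k - emb x k) =
           cF L (\<lambda>k. \<zeta> * emb E k - emb x k) + of_real (x \<bullet> bj j) * cF (dl L (wj j)) (\<lambda>k. \<zeta> * emb E k - emb x k)"
          by (simp add: cL' emb_def Ebj)
        ultimately show False using r by simp
      qed
    qed
    show ?case
    proof (intro exI[of _ L'] conjI allI impI)
      show "valid L' d" unfolding L'_def by (rule valid_stepL[OF V bjB])
      show "foldr (hop vs) (j # l) F0 = rF L'"
      proof
        fix z
        show "foldr (hop vs) (j # l) F0 z = rF L' z"
          by (simp add: FL hop_def frechet_rF rL' zbj wj_def)
      qed
      show "Hyp L' E" by (rule HL')
      show "rF L' (x, 0) = h x" for x using hx by (simp add: rL' zbj)
      fix z and y :: "real^'m" assume z: "z \<in> hcone_open h e" and y: "\<forall>j. y $ j \<le> 0"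
      have pzy: "posc L E (z, y)" using pc z y by blast
      show "posc L' E (z, y)" unfolding posc_def
      proof (intro allI impI)
        fix \<zeta> assume r: "cF L' (\<lambda>k. \<zeta> * emb E k - emb (z, y) k) = 0"
        then have im: "Im \<zeta> = 0" using HL' by (simp add: Hyp_def)
        then have "cF L' (\<lambda>k. of_real (Re \<zeta>) * emb E k - emb (z, y) k) = 0" using r real_cpx[OF im] by simp
        then have "rF L' (Re \<zeta> *\<^sub>R E - (z, y)) = 0" by (simp add: cF_real_line)
        moreover have "(Re \<zeta> *\<^sub>R E - (z, y)) \<bullet> bj j = - (y $ j)"
          by (simp add: zbj E_def)
        ultimately have "rF L (Re \<zeta> *\<^sub>R E - (z, y)) + (y $ j) * rF (dl L (wj j)) (Re \<zeta> *\<^sub>R E - (z, y)) = 0"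
          by (simp add: rL')
        then have "Re \<zeta> > 0" by (rule step_ii[OF V H pzy nn y[rule_format]])
        then show "Im \<zeta> = 0 \<and> Re \<zeta> > 0" using im by simp
      qed
    qed
  qed
  define l0 where "l0 = (SOME l. distinct l \<and> set l = (UNIV :: 'm set))"
  have hb: "hbracket h vs = foldr (hop vs) l0 F0" by (simp add: hbracket_def l0_def F0_def)
  obtain L where V: "valid L d" and FL: "foldr (hop vs) l0 F0 = rF L" and H: "Hyp L E"
    and pc: "\<forall>z y. z \<in> hcone_open h e \<longrightarrow> (\<forall>j. y $ j \<le> 0) \<longrightarrow> posc L E (z, y)"
    using claim by blast
  have "hyperbolic (rF L) E" by (rule Hyp_to_hyperbolic[OF V H])
  moreover have "hcone_open h e \<times> {y :: real^'m. \<forall>j. y $ j \<le> 0} \<subseteq> hcone_open (rF L) E"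
  proof
    fix p assume "p \<in> hcone_open h e \<times> {y :: real^'m. \<forall>j. y $ j \<le> 0}"
    then obtain z and y :: "real^'m" where p: "p = (z, y)" and z: "z \<in> hcone_open h e" and y: "\<forall>j. y $ j \<le> 0" by blast
    have pz: "posc L E (z, y)" using pc z y by blast
    show "p \<in> hcone_open (rF L) E" unfolding hcone_open_def eigenvalues_def
    proof (intro CollectI ballI)
      fix s assume "s \<in> {t. rF L (t *\<^sub>R E - p) = 0}"
      then have "cF L (\<lambda>k. of_real s * emb E k - emb (z, y) k) = 0" by (simp add: cF_real_line p)
      then show "s > 0" using pz[unfolded posc_def, THEN spec, of "of_real s"] by simp
    qed
  qed
  ultimately show ?thesis by (simp add: hb FL E_def)
qed

end
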